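(* Consider the multi-sender unicast index-coding instance with $N=4$ messages and $K=15$ senders, one for each nonempty subset of $[1:4]$ (i.e., the sender sets $\mathcal S_k$ range over all $15$ nonempty subsets of $\{1,2,3,4\}$), each with link capacity $C_k=1$, and receiver side information $\mathcal A_1=\{4\}$, $\mathcal A_2=\{3,4\}$, $\mathcal A_3=\{1,2\}$, $\mathcal A_4=\{2,3\}$. Its capacity region is $$\mathcal C=\left\{(R_1,\dots,R_4)\in\mathbb R_+^4:\begin{array}{l}R_j\le 8\ (j=1,2,3,4),\\ R_1+R_2\le12,\ R_1+R_3\le12,\ R_1+R_4\le12,\ R_3+R_4\le12,\\ R_1+R_2+R_3\le18\end{array}\right\}.$$
   Context: Model. $N$ independent messages $M_1,\dots,M_N$, $M_j$ uniform on $[1:2^{nR_j}]$ ($n$ the block length). Sender $k$ knows the messages $M_i$, $i\in\mathcal S_k$, and sends an index $L_k=f_k((M_i)_{i\in\mathcal S_k})\in[1:2^{nC_k})=\{1,\dots,2^{\lfloor nC_k\rfloor}\}$ over a noiseless broadcast link reaching all receivers. Receiver $j$ knows $M_i$, $i\in\mathcal A_j$, and must output an estimate $\hat M_j=g_j(L_1,\dots,L_K,(M_i)_{i\in\mathcal A_j})$ of $M_j$. A rate tuple is achievable if there exist such codes with $\Pr[(\hat M_1,\dots,\hat M_N)\ne(M_1,\dots,M_N)]\to0$ as $n\to\infty$; the capacity region $\mathcal C$ is the closure of the set of achievable rate tuples. *)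

theory Defs
  imports "HOL-Analysis.Analysis"
begin

text \<open>Senders are indexed by elements k of a
  set K :: 'k set; sender k knows the messages in S k and has link capacity C k;
  receiver j knows the messages in A j.\<close>

definition msg_set :: "nat \<Rightarrow> real^'n \<Rightarrow> 'n \<Rightarrow> nat set" where
  "msg_set n R j = {1 .. 2 ^ nat \<lceil>real n * R $ j\<rceil>}"

text \<open>All message tuples (the messages are independent and uniform on this product set).\<close>
definition msg_tuples :: "nat \<Rightarrow> real^'n \<Rightarrow> ('n \<Rightarrow> nat) set" where
  "msg_tuples n R = PiE UNIV (msg_set n R)"

definition link_set :: "nat \<Rightarrow> real \<Rightarrow> nat set" where
  "link_set n c = {1 .. 2 ^ nat \<lfloor>real n * c\<rfloor>}"

definition sent :: "'k set \<Rightarrow> ('k \<Rightarrow> 'n set) \<Rightarrow> ('k \<Rightarrow> ('n \<Rightarrow> nat) \<Rightarrow> nat)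
    \<Rightarrow> ('n \<Rightarrow> nat) \<Rightarrow> ('k \<Rightarrow> nat)" where
  "sent K S f m = (\<lambda>k\<in>K. f k (restrict m (S k)))"

definition valid_encoders :: "nat \<Rightarrow> real^'n \<Rightarrow> 'k set \<Rightarrow> ('k \<Rightarrow> 'n set) \<Rightarrow> ('k \<Rightarrow> real)
    \<Rightarrow> ('k \<Rightarrow> ('n \<Rightarrow> nat) \<Rightarrow> nat) \<Rightarrow> bool" where
  "valid_encoders n R K S C f \<longleftrightarrow>
     (\<forall>k\<in>K. \<forall>m\<in>msg_tuples n R. f k (restrict m (S k)) \<in> link_set n (C k))"

definition error_prob :: "nat \<Rightarrow> real^'n \<Rightarrow> 'k set \<Rightarrow> ('k \<Rightarrow> 'n set) \<Rightarrow> ('n \<Rightarrow> 'n set)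
    \<Rightarrow> ('k \<Rightarrow> ('n \<Rightarrow> nat) \<Rightarrow> nat) \<Rightarrow> ('n \<Rightarrow> ('k \<Rightarrow> nat) \<Rightarrow> ('n \<Rightarrow> nat) \<Rightarrow> nat) \<Rightarrow> real" where
  "error_prob n R K S A f g =
     real (card {m \<in> msg_tuples n R. \<exists>j. g j (sent K S f m) (restrict m (A j)) \<noteq> m j})
     / real (card (msg_tuples n R))"

definition achievable :: "'k set \<Rightarrow> ('k \<Rightarrow> 'n set) \<Rightarrow> ('k \<Rightarrow> real) \<Rightarrow> ('n \<Rightarrow> 'n set)
    \<Rightarrow> real^'n \<Rightarrow> bool" where
  "achievable K S C A R \<longleftrightarrow> (\<forall>j. 0 \<le> R $ j) \<and>
     (\<exists>F G. (\<forall>n. valid_encoders n R K S C (F n)) \<and>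
            (\<lambda>n. error_prob n R K S A (F n) (G n)) \<longlonglongrightarrow> 0)"

definition capacity_region :: "'k set \<Rightarrow> ('k \<Rightarrow> 'n set) \<Rightarrow> ('k \<Rightarrow> real) \<Rightarrow> ('n \<Rightarrow> 'n set)
    \<Rightarrow> (real^'n) set" where
  "capacity_region K S C A = closure {R. achievable K S C A R}"

end

theory Submission
  imports Defs
begin


definition zcode :: "'k set \<Rightarrow> ('k \<Rightarrow> 'n set) \<Rightarrow> ('n \<Rightarrow> 'n set) \<Rightarrow> ('n \<Rightarrow> 'a set) \<Rightarrow> 'b set
   \<Rightarrow> ('k \<Rightarrow> ('n \<Rightarrow> 'a) \<Rightarrow> 'b) \<Rightarrow> ('n \<Rightarrow> ('k \<Rightarrow> 'b) \<Rightarrow> ('n \<Rightarrow> 'a) \<Rightarrow> 'a) \<Rightarrow> bool" where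
  "zcode K S A M L e d \<longleftrightarrow> (\<forall>m. (\<forall>j. m j \<in> M j) \<longrightarrow>
     (\<forall>k\<in>K. e k (restrict m (S k)) \<in> L) \<and>
     (\<forall>j. d j (\<lambda>k\<in>K. e k (restrict m (S k))) (restrict m (A j)) = m j))"

definition Ainst :: "4 \<Rightarrow> 4 set" where
  "Ainst = (\<lambda>j :: 4. if j = 1 then {4} else if j = 2 then {3, 4}
                     else if j = 3 then {1, 2} else {2, 3})"

definition Kinst :: "4 set set" where "Kinst = {S :: 4 set. S \<noteq> {}}"

lemma exhaust4: "(j::4) = 1 \<or> j = 2 \<or> j = 3 \<or> j = 4"
proof -
  have "j \<in> UNIV" by simp
  then show ?thesis by (simp add: UNIV_4)
qed

type_synonym piece = "4 \<times> nat"

definition lenc :: "int \<Rightarrow> (4 set \<Rightarrow> piece list) \<Rightarrow> 4 set \<Rightarrow> (4 \<Rightarrow> nat \<Rightarrow> int) \<Rightarrow> int" where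
  "lenc s tab k mm = (\<Sum>q\<leftarrow>tab k. mm (fst q) (snd q)) mod s"

fun run :: "int \<Rightarrow> (4 set \<Rightarrow> piece list) \<Rightarrow> (4 set \<Rightarrow> int) \<Rightarrow> (4 set \<times> piece) list
    \<Rightarrow> (piece \<Rightarrow> int) \<Rightarrow> (piece \<Rightarrow> int)" where
  "run s tab l [] v = v"
| "run s tab l ((k,p)#st) v = run s tab l st (v(p := (l k - (\<Sum>q\<leftarrow>remove1 p (tab k). v q)) mod s))"

definition ldec :: "int \<Rightarrow> (4 set \<Rightarrow> piece list) \<Rightarrow> (4 \<Rightarrow> (4 set \<times> piece) list) \<Rightarrow> (4 \<Rightarrow> nat)
    \<Rightarrow> 4 \<Rightarrow> (4 set \<Rightarrow> int) \<Rightarrow> (4 \<Rightarrow> nat \<Rightarrow> int) \<Rightarrow> nat \<Rightarrow> int" where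
  "ldec s tab steps w j l sd = (\<lambda>i\<in>{..<w j}. run s tab l (steps j) (\<lambda>q. sd (fst q) (snd q)) (j, i))"

fun chk :: "(4 set \<Rightarrow> piece list) \<Rightarrow> piece list \<Rightarrow> (4 set \<times> piece) list \<Rightarrow> piece list option" where
  "chk tab kn [] = Some kn"
| "chk tab kn ((k,p)#st) = (if k \<noteq> {} \<and> p \<in> set (tab k) \<and> (\<forall>q\<in>set (remove1 p (tab k)). q \<in> set kn)
      then chk tab (p#kn) st else None)"

lemma run_correct:
  fixes mm :: "piece \<Rightarrow> int"
  assumes "chk tab kn st = Some kn'"
    and "\<forall>q\<in>set kn. v q = mm q"
    and "\<And>k. k \<noteq> {} \<Longrightarrow> l k = (\<Sum>q\<leftarrow>tab k. mm q) mod s"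
    and "\<And>k q. k \<noteq> {} \<Longrightarrow> q \<in> set (tab k) \<Longrightarrow> 0 \<le> mm q \<and> mm q < s"
  shows "\<forall>q\<in>set kn'. run s tab l st v q = mm q"
  using assms(1,2)
proof (induction st arbitrary: kn v)
  case Nil then show ?case by simp
next
  case (Cons a st)
  obtain k p where a: "a = (k,p)" by (cases a)
  from Cons.prems(1) a have c: "k \<noteq> {}" "p \<in> set (tab k)" "\<forall>q\<in>set (remove1 p (tab k)). q \<in> set kn"
    and rest: "chk tab (p#kn) st = Some kn'" by (auto split: if_splits)
  have s1: "(\<Sum>q\<leftarrow>remove1 p (tab k). v q) = (\<Sum>q\<leftarrow>remove1 p (tab k). mm q)"
    using c(3) Cons.prems(2) by (intro arg_cong[where f=sum_list] map_cong) auto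
  have s2: "(\<Sum>q\<leftarrow>tab k. mm q) = mm p + (\<Sum>q\<leftarrow>remove1 p (tab k). mm q)"
    using c(2) by (rule sum_list_map_remove1)
  have "(l k - (\<Sum>q\<leftarrow>remove1 p (tab k). v q)) mod s = mm p"
    using assms(3)[OF c(1)] assms(4)[OF c(1) c(2)] s1 s2 by (simp add: mod_simps)
  then have "\<forall>q\<in>set (p#kn). (v(p := (l k - (\<Sum>q\<leftarrow>remove1 p (tab k). v q)) mod s)) q = mm q"
    using Cons.prems(2) by auto
  from Cons.IH[OF rest this] show ?case unfolding a run.simps .
qed

lemma zcode_lin:
  fixes w :: "4 \<Rightarrow> nat" and s :: int
  assumes s: "0 < s"
    and wf: "\<And>k q. q \<in> set (tab k) \<Longrightarrow> fst q \<in> k \<and> snd q < w (fst q)"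
    and ini: "\<And>j q. q \<in> set (ini j) \<Longrightarrow> fst q \<in> Ainst j"
    and ok: "\<And>j. \<exists>kn'. chk tab (ini j) (steps j) = Some kn' \<and> list_all (\<lambda>i. (j,i) \<in> set kn') [0..<w j]"
  shows "zcode Kinst id Ainst (\<lambda>j. PiE {..<w j} (\<lambda>_. {0..<s})) {0..<s} (lenc s tab) (ldec s tab steps w)"
  unfolding zcode_def
proof (intro allI impI conjI ballI)
  fix m :: "4 \<Rightarrow> nat \<Rightarrow> int" assume m: "\<forall>j. m j \<in> PiE {..<w j} (\<lambda>_. {0..<s})"
  fix k show "lenc s tab k (restrict m (id k)) \<in> {0..<s}" using s by (simp add: lenc_def)
next
  fix m :: "4 \<Rightarrow> nat \<Rightarrow> int" assume m: "\<forall>j. m j \<in> PiE {..<w j} (\<lambda>_. {0..<s})"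
  define mm where "mm q = m (fst q) (snd q)" for q
  have bnd: "\<And>j i. i < w j \<Longrightarrow> 0 \<le> m j i \<and> m j i < s"
    using m by (auto simp: PiE_iff)
  have ud: "\<And>j i. \<not> i < w j \<Longrightarrow> m j i = undefined"
    using m by (auto simp: PiE_iff extensional_def)
  fix j
  define l where "l = (\<lambda>k\<in>Kinst. lenc s tab k (restrict m (id k)))"
  have lk: "l k = (\<Sum>q\<leftarrow>tab k. mm q) mod s" if "k \<noteq> {}" for k
  proof -
    have "(\<Sum>q\<leftarrow>tab k. restrict m k (fst q) (snd q)) = (\<Sum>q\<leftarrow>tab k. mm q)"
      using wf[of _ k] by (intro arg_cong[where f=sum_list] map_cong) (auto simp: mm_def)
    then show ?thesis using that by (simp add: l_def Kinst_def lenc_def)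
  qed
  have bq: "0 \<le> mm q \<and> mm q < s" if "k \<noteq> {}" "q \<in> set (tab k)" for k q
    using wf[OF that(2)] bnd by (simp add: mm_def)
  obtain kn' where kn': "chk tab (ini j) (steps j) = Some kn'" "\<forall>i<w j. (j,i) \<in> set kn'"
    using ok[of j] by (auto simp: list_all_iff)
  have iv: "\<forall>q\<in>set (ini j). (\<lambda>q. restrict m (Ainst j) (fst q) (snd q)) q = mm q"
    using ini[of _ j] by (auto simp: mm_def)
  have rc: "\<forall>q\<in>set kn'. run s tab l (steps j) (\<lambda>q. restrict m (Ainst j) (fst q) (snd q)) q = mm q"
    by (rule run_correct[OF kn'(1) iv lk bq])
  show "ldec s tab steps w j l (restrict m (Ainst j)) = m j"
  proof
    fix i show "ldec s tab steps w j l (restrict m (Ainst j)) i = m j i"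
    proof (cases "i < w j")
      case True
      then show ?thesis using rc kn'(2) by (simp add: ldec_def mm_def)
    next
      case False
      then show ?thesis using ud[OF False] by (simp add: ldec_def)
    qed
  qed
qed

definition wV1 :: "4 \<Rightarrow> nat" where "wV1 j = (if j = 1 then 2 else if j = 2 then 8 else if j = 3 then 8 else 4)"

definition tabV1 :: "4 set \<Rightarrow> piece list" where
  "tabV1 k = (if 1 \<in> k \<and> 2 \<notin> k \<and> 3 \<notin> k \<and> 4 \<notin> k then [(1,0)] else
    if 1 \<notin> k \<and> 2 \<in> k \<and> 3 \<notin> k \<and> 4 \<notin> k then [(2,1), (2,3), (2,5), (2,6)] else
    if 1 \<notin> k \<and> 2 \<notin> k \<and> 3 \<in> k \<and> 4 \<notin> k then [(3,2), (3,5), (3,6)] else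
    if 1 \<notin> k \<and> 2 \<notin> k \<and> 3 \<notin> k \<and> 4 \<in> k then [(4,0), (4,2), (4,3)] else
    if 1 \<in> k \<and> 2 \<in> k \<and> 3 \<notin> k \<and> 4 \<notin> k then [(2,0), (2,2), (2,4), (2,7)] else
    if 1 \<in> k \<and> 2 \<notin> k \<and> 3 \<in> k \<and> 4 \<notin> k then [(3,2)] else
    if 1 \<in> k \<and> 2 \<notin> k \<and> 3 \<notin> k \<and> 4 \<in> k then [(1,0), (1,1), (4,2)] else
    if 1 \<notin> k \<and> 2 \<in> k \<and> 3 \<in> k \<and> 4 \<notin> k then [(2,0), (3,0)] else
    if 1 \<notin> k \<and> 2 \<in> k \<and> 3 \<notin> k \<and> 4 \<in> k then [(2,1), (2,2), (2,5), (4,1)] else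
    if 1 \<notin> k \<and> 2 \<notin> k \<and> 3 \<in> k \<and> 4 \<in> k then [(3,1), (3,3)] else
    if 1 \<in> k \<and> 2 \<in> k \<and> 3 \<in> k \<and> 4 \<notin> k then [(2,6), (3,3), (3,4)] else
    if 1 \<in> k \<and> 2 \<in> k \<and> 3 \<notin> k \<and> 4 \<in> k then [(1,0), (2,3), (2,6), (4,3)] else
    if 1 \<in> k \<and> 2 \<notin> k \<and> 3 \<in> k \<and> 4 \<in> k then [(1,1), (3,5)] else
    if 1 \<notin> k \<and> 2 \<in> k \<and> 3 \<in> k \<and> 4 \<in> k then [(2,5), (2,6), (3,4)] else
    if 1 \<in> k \<and> 2 \<in> k \<and> 3 \<in> k \<and> 4 \<in> k then [(2,4), (3,7), (4,1)] else [])"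

definition stepsV1 :: "4 \<Rightarrow> (4 set \<times> piece) list" where
  "stepsV1 j = (if j = 1 then [({1},(1,0)), ({1,3},(3,2)), ({1,4},(1,1)), ({1,3,4},(3,5)), ({3},(3,6))] else if j = 2 then [({1},(1,0)), ({1,4},(1,1)), ({2,3},(2,0)), ({1,2,3},(2,6)), ({1,2,4},(2,3)), ({2,3,4},(2,5)), ({1,2,3,4},(2,4)), ({2},(2,1)), ({2,4},(2,2)), ({1,2},(2,7))] else if j = 3 then [({1,3},(3,2)), ({1,4},(4,2)), ({2,3},(3,0)), ({2,4},(4,1)), ({1,2,4},(4,3)), ({1,3,4},(3,5)), ({2,3,4},(3,4)), ({1,2,3,4},(3,7)), ({3},(3,6)), ({4},(4,0)), ({1,2,3},(3,3)), ({3,4},(3,1))] else [({1},(1,0)), ({2,4},(4,1)), ({1,2,4},(4,3)), ({1,3,4},(1,1)), ({1,4},(4,2)), ({4},(4,0))])"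

definition iniV1 :: "4 \<Rightarrow> piece list" where
  "iniV1 j = (if j = 1 then [(4,0), (4,1), (4,2), (4,3)] else if j = 2 then [(3,0), (3,1), (3,2), (3,3), (3,4), (3,5), (3,6), (3,7), (4,0), (4,1), (4,2), (4,3)] else if j = 3 then [(1,0), (1,1), (2,0), (2,1), (2,2), (2,3), (2,4), (2,5), (2,6), (2,7)] else [(2,0), (2,1), (2,2), (2,3), (2,4), (2,5), (2,6), (2,7), (3,0), (3,1), (3,2), (3,3), (3,4), (3,5), (3,6), (3,7)])"

lemma zcodeV1: "0 < s \<Longrightarrow> zcode Kinst id Ainst (\<lambda>j. PiE {..<wV1 j} (\<lambda>_. {0..<s})) {0..<s} (lenc s tabV1) (ldec s tabV1 stepsV1 wV1)"
proof (rule zcode_lin)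
  show "fst q \<in> k \<and> snd q < wV1 (fst q)" if "q \<in> set (tabV1 k)" for k q
    using that unfolding tabV1_def by (auto split: if_splits simp: wV1_def)
  show "fst q \<in> Ainst j" if "q \<in> set (iniV1 j)" for j q
    using that unfolding iniV1_def by (auto split: if_splits simp: Ainst_def)
  show "\<exists>kn'. chk tabV1 (iniV1 j) (stepsV1 j) = Some kn' \<and> list_all (\<lambda>i. (j,i) \<in> set kn') [0..<wV1 j]" for j
    using exhaust4[of j] by (elim disjE) (simp_all add: stepsV1_def iniV1_def tabV1_def wV1_def upt_rec)
qed

definition wV2 :: "4 \<Rightarrow> nat" where "wV2 j = (if j = 1 then 4 else if j = 2 then 6 else if j = 3 then 8 else 4)"

definition tabV2 :: "4 set \<Rightarrow> piece list" where
  "tabV2 k = (if 1 \<in> k \<and> 2 \<notin> k \<and> 3 \<notin> k \<and> 4 \<notin> k then [(1,0), (1,1), (1,3)] else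
    if 1 \<notin> k \<and> 2 \<in> k \<and> 3 \<notin> k \<and> 4 \<notin> k then [(2,2)] else
    if 1 \<notin> k \<and> 2 \<notin> k \<and> 3 \<in> k \<and> 4 \<notin> k then [(3,1), (3,3), (3,4), (3,5)] else
    if 1 \<notin> k \<and> 2 \<notin> k \<and> 3 \<notin> k \<and> 4 \<in> k then [(4,0), (4,1), (4,3)] else
    if 1 \<in> k \<and> 2 \<in> k \<and> 3 \<notin> k \<and> 4 \<notin> k then [(1,3), (2,2)] else
    if 1 \<in> k \<and> 2 \<notin> k \<and> 3 \<in> k \<and> 4 \<notin> k then [(1,2), (3,0), (3,2), (3,6)] else
    if 1 \<in> k \<and> 2 \<notin> k \<and> 3 \<notin> k \<and> 4 \<in> k then [(1,1), (4,3)] else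
    if 1 \<notin> k \<and> 2 \<in> k \<and> 3 \<in> k \<and> 4 \<notin> k then [(2,0), (2,4), (3,1), (3,5)] else
    if 1 \<notin> k \<and> 2 \<in> k \<and> 3 \<notin> k \<and> 4 \<in> k then [(2,3), (4,0)] else
    if 1 \<notin> k \<and> 2 \<notin> k \<and> 3 \<in> k \<and> 4 \<in> k then [(3,1), (3,2), (3,7), (4,1)] else
    if 1 \<in> k \<and> 2 \<in> k \<and> 3 \<in> k \<and> 4 \<notin> k then [(1,3), (2,0), (3,0), (3,4)] else
    if 1 \<in> k \<and> 2 \<in> k \<and> 3 \<notin> k \<and> 4 \<in> k then [(1,2), (4,2)] else
    if 1 \<in> k \<and> 2 \<notin> k \<and> 3 \<in> k \<and> 4 \<in> k then [(1,2), (3,2)] else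
    if 1 \<notin> k \<and> 2 \<in> k \<and> 3 \<in> k \<and> 4 \<in> k then [(2,5), (3,0), (3,5), (4,1)] else
    if 1 \<in> k \<and> 2 \<in> k \<and> 3 \<in> k \<and> 4 \<in> k then [(2,1), (3,5)] else [])"

definition stepsV2 :: "4 \<Rightarrow> (4 set \<times> piece) list" where
  "stepsV2 j = (if j = 1 then [({2},(2,2)), ({1,2},(1,3)), ({1,4},(1,1)), ({2,4},(2,3)), ({1,2,4},(1,2)), ({1,3,4},(3,2)), ({1},(1,0))] else if j = 2 then [({2},(2,2)), ({1,2},(1,3)), ({1,3},(1,2)), ({1,4},(1,1)), ({2,4},(2,3)), ({1,2,3},(2,0)), ({2,3,4},(2,5)), ({1,2,3,4},(2,1)), ({1},(1,0)), ({2,3},(2,4))] else if j = 3 then [({1,4},(4,3)), ({2,4},(4,0)), ({1,2,4},(4,2)), ({1,3,4},(3,2)), ({1,2,3,4},(3,5)), ({4},(4,1)), ({2,3},(3,1)), ({3,4},(3,7)), ({2,3,4},(3,0)), ({1,3},(3,6)), ({1,2,3},(3,4)), ({3},(3,3))] else [({1,2},(1,3)), ({1,3},(1,2)), ({2,4},(4,0)), ({3,4},(4,1)), ({1,2,4},(4,2)), ({4},(4,3)), ({1,4},(1,1)), ({1},(1,0))])"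

definition iniV2 :: "4 \<Rightarrow> piece list" where
  "iniV2 j = (if j = 1 then [(4,0), (4,1), (4,2), (4,3)] else if j = 2 then [(3,0), (3,1), (3,2), (3,3), (3,4), (3,5), (3,6), (3,7), (4,0), (4,1), (4,2), (4,3)] else if j = 3 then [(1,0), (1,1), (1,2), (1,3), (2,0), (2,1), (2,2), (2,3), (2,4), (2,5)] else [(2,0), (2,1), (2,2), (2,3), (2,4), (2,5), (3,0), (3,1), (3,2), (3,3), (3,4), (3,5), (3,6), (3,7)])"

lemma zcodeV2: "0 < s \<Longrightarrow> zcode Kinst id Ainst (\<lambda>j. PiE {..<wV2 j} (\<lambda>_. {0..<s})) {0..<s} (lenc s tabV2) (ldec s tabV2 stepsV2 wV2)"
proof (rule zcode_lin)
  show "fst q \<in> k \<and> snd q < wV2 (fst q)" if "q \<in> set (tabV2 k)" for k q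
    using that unfolding tabV2_def by (auto split: if_splits simp: wV2_def)
  show "fst q \<in> Ainst j" if "q \<in> set (iniV2 j)" for j q
    using that unfolding iniV2_def by (auto split: if_splits simp: Ainst_def)
  show "\<exists>kn'. chk tabV2 (iniV2 j) (stepsV2 j) = Some kn' \<and> list_all (\<lambda>i. (j,i) \<in> set kn') [0..<wV2 j]" for j
    using exhaust4[of j] by (elim disjE) (simp_all add: stepsV2_def iniV2_def tabV2_def wV2_def upt_rec)
qed

definition wV3 :: "4 \<Rightarrow> nat" where "wV3 j = (if j = 1 then 4 else if j = 2 then 8 else if j = 3 then 4 else 8)"

definition tabV3 :: "4 set \<Rightarrow> piece list" where
  "tabV3 k = (if 1 \<in> k \<and> 2 \<notin> k \<and> 3 \<notin> k \<and> 4 \<notin> k then [(1,1), (1,2)] else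
    if 1 \<notin> k \<and> 2 \<in> k \<and> 3 \<notin> k \<and> 4 \<notin> k then [(2,0), (2,6)] else
    if 1 \<notin> k \<and> 2 \<notin> k \<and> 3 \<in> k \<and> 4 \<notin> k then [(3,0), (3,2)] else
    if 1 \<notin> k \<and> 2 \<notin> k \<and> 3 \<notin> k \<and> 4 \<in> k then [(4,1), (4,3), (4,4)] else
    if 1 \<in> k \<and> 2 \<in> k \<and> 3 \<notin> k \<and> 4 \<notin> k then [(1,3), (2,1)] else
    if 1 \<in> k \<and> 2 \<notin> k \<and> 3 \<in> k \<and> 4 \<notin> k then [(1,0), (1,3), (3,2)] else
    if 1 \<in> k \<and> 2 \<notin> k \<and> 3 \<notin> k \<and> 4 \<in> k then [(1,1), (4,4)] else
    if 1 \<notin> k \<and> 2 \<in> k \<and> 3 \<in> k \<and> 4 \<notin> k then [(2,2), (2,4), (3,1), (3,3)] else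
    if 1 \<notin> k \<and> 2 \<in> k \<and> 3 \<notin> k \<and> 4 \<in> k then [(2,3), (4,4), (4,6)] else
    if 1 \<notin> k \<and> 2 \<notin> k \<and> 3 \<in> k \<and> 4 \<in> k then [(3,2), (4,0)] else
    if 1 \<in> k \<and> 2 \<in> k \<and> 3 \<in> k \<and> 4 \<notin> k then [(1,1), (2,4), (2,6), (3,3)] else
    if 1 \<in> k \<and> 2 \<in> k \<and> 3 \<notin> k \<and> 4 \<in> k then [(2,6), (4,5)] else
    if 1 \<in> k \<and> 2 \<notin> k \<and> 3 \<in> k \<and> 4 \<in> k then [(1,0), (4,2), (4,3), (4,4)] else
    if 1 \<notin> k \<and> 2 \<in> k \<and> 3 \<in> k \<and> 4 \<in> k then [(2,5), (4,1), (4,4)] else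
    if 1 \<in> k \<and> 2 \<in> k \<and> 3 \<in> k \<and> 4 \<in> k then [(1,3), (2,7), (3,1), (4,7)] else [])"

definition stepsV3 :: "4 \<Rightarrow> (4 set \<times> piece) list" where
  "stepsV3 j = (if j = 1 then [({1,4},(1,1)), ({2,4},(2,3)), ({3,4},(3,2)), ({1,2,4},(2,6)), ({1,3,4},(1,0)), ({2,3,4},(2,5)), ({1},(1,2)), ({2},(2,0)), ({3},(3,0)), ({1,3},(1,3)), ({1,2},(2,1))] else if j = 2 then [({1,4},(1,1)), ({2,4},(2,3)), ({1,2,4},(2,6)), ({1,3,4},(1,0)), ({2,3,4},(2,5)), ({1},(1,2)), ({2},(2,0)), ({1,3},(1,3)), ({1,2,3},(2,4)), ({1,2,3,4},(2,7)), ({1,2},(2,1)), ({2,3},(2,2))] else if j = 3 then [({1,3},(3,2)), ({1,4},(4,4)), ({2,4},(4,6)), ({3,4},(4,0)), ({1,2,3},(3,3)), ({1,2,4},(4,5)), ({2,3,4},(4,1)), ({3},(3,0)), ({4},(4,3)), ({2,3},(3,1)), ({1,3,4},(4,2)), ({1,2,3,4},(4,7))] else [({1,2},(1,3)), ({1,3},(1,0)), ({3,4},(4,0)), ({1,2,3},(1,1)), ({1,2,4},(4,5)), ({1,2,3,4},(4,7)), ({1},(1,2)), ({1,4},(4,4)), ({2,4},(4,6)), ({2,3,4},(4,1)), ({4},(4,3)), ({1,3,4},(4,2))])"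

definition iniV3 :: "4 \<Rightarrow> piece list" where
  "iniV3 j = (if j = 1 then [(4,0), (4,1), (4,2), (4,3), (4,4), (4,5), (4,6), (4,7)] else if j = 2 then [(3,0), (3,1), (3,2), (3,3), (4,0), (4,1), (4,2), (4,3), (4,4), (4,5), (4,6), (4,7)] else if j = 3 then [(1,0), (1,1), (1,2), (1,3), (2,0), (2,1), (2,2), (2,3), (2,4), (2,5), (2,6), (2,7)] else [(2,0), (2,1), (2,2), (2,3), (2,4), (2,5), (2,6), (2,7), (3,0), (3,1), (3,2), (3,3)])"

lemma zcodeV3: "0 < s \<Longrightarrow> zcode Kinst id Ainst (\<lambda>j. PiE {..<wV3 j} (\<lambda>_. {0..<s})) {0..<s} (lenc s tabV3) (ldec s tabV3 stepsV3 wV3)"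
proof (rule zcode_lin)
  show "fst q \<in> k \<and> snd q < wV3 (fst q)" if "q \<in> set (tabV3 k)" for k q
    using that unfolding tabV3_def by (auto split: if_splits simp: wV3_def)
  show "fst q \<in> Ainst j" if "q \<in> set (iniV3 j)" for j q
    using that unfolding iniV3_def by (auto split: if_splits simp: Ainst_def)
  show "\<exists>kn'. chk tabV3 (iniV3 j) (stepsV3 j) = Some kn' \<and> list_all (\<lambda>i. (j,i) \<in> set kn') [0..<wV3 j]" for j
    using exhaust4[of j] by (elim disjE) (simp_all add: stepsV3_def iniV3_def tabV3_def wV3_def upt_rec)
qed

definition wV4 :: "4 \<Rightarrow> nat" where "wV4 j = (if j = 1 then 4 else if j = 2 then 8 else if j = 3 then 6 else 6)"

definition tabV4 :: "4 set \<Rightarrow> piece list" where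
  "tabV4 k = (if 1 \<in> k \<and> 2 \<notin> k \<and> 3 \<notin> k \<and> 4 \<notin> k then [(1,0), (1,2), (1,3)] else
    if 1 \<notin> k \<and> 2 \<in> k \<and> 3 \<notin> k \<and> 4 \<notin> k then [(2,2), (2,3), (2,4), (2,7)] else
    if 1 \<notin> k \<and> 2 \<notin> k \<and> 3 \<in> k \<and> 4 \<notin> k then [(3,0), (3,3), (3,5)] else
    if 1 \<notin> k \<and> 2 \<notin> k \<and> 3 \<notin> k \<and> 4 \<in> k then [(4,1), (4,3)] else
    if 1 \<in> k \<and> 2 \<in> k \<and> 3 \<notin> k \<and> 4 \<notin> k then [(1,0), (1,1), (2,4), (2,5)] else
    if 1 \<in> k \<and> 2 \<notin> k \<and> 3 \<in> k \<and> 4 \<notin> k then [(1,1), (1,2), (3,5)] else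
    if 1 \<in> k \<and> 2 \<notin> k \<and> 3 \<notin> k \<and> 4 \<in> k then [(1,0), (1,3), (4,2)] else
    if 1 \<notin> k \<and> 2 \<in> k \<and> 3 \<in> k \<and> 4 \<notin> k then [(2,0), (3,2), (3,3)] else
    if 1 \<notin> k \<and> 2 \<in> k \<and> 3 \<notin> k \<and> 4 \<in> k then [(2,0), (2,1), (2,7), (4,5)] else
    if 1 \<notin> k \<and> 2 \<notin> k \<and> 3 \<in> k \<and> 4 \<in> k then [(3,5), (4,3)] else
    if 1 \<in> k \<and> 2 \<in> k \<and> 3 \<in> k \<and> 4 \<notin> k then [(1,1), (2,6), (2,7), (3,4)] else
    if 1 \<in> k \<and> 2 \<in> k \<and> 3 \<notin> k \<and> 4 \<in> k then [(1,0), (2,2), (4,4)] else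
    if 1 \<in> k \<and> 2 \<notin> k \<and> 3 \<in> k \<and> 4 \<in> k then [(1,0), (4,0), (4,2)] else
    if 1 \<notin> k \<and> 2 \<in> k \<and> 3 \<in> k \<and> 4 \<in> k then [(2,4), (2,7), (3,2), (4,3)] else
    if 1 \<in> k \<and> 2 \<in> k \<and> 3 \<in> k \<and> 4 \<in> k then [(2,4), (3,1)] else [])"

definition stepsV4 :: "4 \<Rightarrow> (4 set \<times> piece) list" where
  "stepsV4 j = (if j = 1 then [({3,4},(3,5)), ({1,3,4},(1,0)), ({1,4},(1,3)), ({1,2,4},(2,2)), ({1},(1,2)), ({1,3},(1,1))] else if j = 2 then [({2,3},(2,0)), ({1,3,4},(1,0)), ({1,2,3,4},(2,4)), ({1,4},(1,3)), ({1,2,4},(2,2)), ({2,3,4},(2,7)), ({1},(1,2)), ({2},(2,3)), ({1,3},(1,1)), ({2,4},(2,1)), ({1,2,3},(2,6)), ({1,2},(2,5))] else if j = 3 then [({1,3},(3,5)), ({1,4},(4,2)), ({2,4},(4,5)), ({3,4},(4,3)), ({1,2,3},(3,4)), ({1,2,4},(4,4)), ({1,3,4},(4,0)), ({2,3,4},(3,2)), ({1,2,3,4},(3,1)), ({4},(4,1)), ({2,3},(3,3)), ({3},(3,0))] else [({2,4},(4,5)), ({3,4},(4,3)), ({1,2,3},(1,1)), ({4},(4,1)), ({1,2},(1,0)), ({1,3},(1,2)), ({1,2,4},(4,4)), ({1},(1,3)), ({1,4},(4,2)), ({1,3,4},(4,0))])"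

definition iniV4 :: "4 \<Rightarrow> piece list" where
  "iniV4 j = (if j = 1 then [(4,0), (4,1), (4,2), (4,3), (4,4), (4,5)] else if j = 2 then [(3,0), (3,1), (3,2), (3,3), (3,4), (3,5), (4,0), (4,1), (4,2), (4,3), (4,4), (4,5)] else if j = 3 then [(1,0), (1,1), (1,2), (1,3), (2,0), (2,1), (2,2), (2,3), (2,4), (2,5), (2,6), (2,7)] else [(2,0), (2,1), (2,2), (2,3), (2,4), (2,5), (2,6), (2,7), (3,0), (3,1), (3,2), (3,3), (3,4), (3,5)])"

lemma zcodeV4: "0 < s \<Longrightarrow> zcode Kinst id Ainst (\<lambda>j. PiE {..<wV4 j} (\<lambda>_. {0..<s})) {0..<s} (lenc s tabV4) (ldec s tabV4 stepsV4 wV4)"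
proof (rule zcode_lin)
  show "fst q \<in> k \<and> snd q < wV4 (fst q)" if "q \<in> set (tabV4 k)" for k q
    using that unfolding tabV4_def by (auto split: if_splits simp: wV4_def)
  show "fst q \<in> Ainst j" if "q \<in> set (iniV4 j)" for j q
    using that unfolding iniV4_def by (auto split: if_splits simp: Ainst_def)
  show "\<exists>kn'. chk tabV4 (iniV4 j) (stepsV4 j) = Some kn' \<and> list_all (\<lambda>i. (j,i) \<in> set kn') [0..<wV4 j]" for j
    using exhaust4[of j] by (elim disjE) (simp_all add: stepsV4_def iniV4_def tabV4_def wV4_def upt_rec)
qed

definition wV5 :: "4 \<Rightarrow> nat" where "wV5 j = (if j = 1 then 6 else if j = 2 then 6 else if j = 3 then 6 else 6)"

definition tabV5 :: "4 set \<Rightarrow> piece list" where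
  "tabV5 k = (if 1 \<in> k \<and> 2 \<notin> k \<and> 3 \<notin> k \<and> 4 \<notin> k then [(1,0), (1,1)] else
    if 1 \<notin> k \<and> 2 \<in> k \<and> 3 \<notin> k \<and> 4 \<notin> k then [(2,0), (2,1)] else
    if 1 \<notin> k \<and> 2 \<notin> k \<and> 3 \<in> k \<and> 4 \<notin> k then [(3,3)] else
    if 1 \<notin> k \<and> 2 \<notin> k \<and> 3 \<notin> k \<and> 4 \<in> k then [(4,1), (4,4)] else
    if 1 \<in> k \<and> 2 \<in> k \<and> 3 \<notin> k \<and> 4 \<notin> k then [(1,4)] else
    if 1 \<in> k \<and> 2 \<notin> k \<and> 3 \<in> k \<and> 4 \<notin> k then [(1,5), (3,5)] else
    if 1 \<in> k \<and> 2 \<notin> k \<and> 3 \<notin> k \<and> 4 \<in> k then [(1,1), (1,4), (4,0), (4,2)] else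
    if 1 \<notin> k \<and> 2 \<in> k \<and> 3 \<in> k \<and> 4 \<notin> k then [(2,3), (2,5), (3,4), (3,5)] else
    if 1 \<notin> k \<and> 2 \<in> k \<and> 3 \<notin> k \<and> 4 \<in> k then [(2,4), (2,5), (4,1), (4,2)] else
    if 1 \<notin> k \<and> 2 \<notin> k \<and> 3 \<in> k \<and> 4 \<in> k then [(3,5), (4,3)] else
    if 1 \<in> k \<and> 2 \<in> k \<and> 3 \<in> k \<and> 4 \<notin> k then [(1,2), (2,2), (2,3), (3,2)] else
    if 1 \<in> k \<and> 2 \<in> k \<and> 3 \<notin> k \<and> 4 \<in> k then [(1,3), (4,0)] else
    if 1 \<in> k \<and> 2 \<notin> k \<and> 3 \<in> k \<and> 4 \<in> k then [(1,2), (1,5), (4,3), (4,5)] else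
    if 1 \<notin> k \<and> 2 \<in> k \<and> 3 \<in> k \<and> 4 \<in> k then [(2,1), (2,5), (3,0), (4,0)] else
    if 1 \<in> k \<and> 2 \<in> k \<and> 3 \<in> k \<and> 4 \<in> k then [(2,4), (3,1), (3,2), (4,2)] else [])"

definition stepsV5 :: "4 \<Rightarrow> (4 set \<times> piece) list" where
  "stepsV5 j = (if j = 1 then [({3},(3,3)), ({1,2},(1,4)), ({1,4},(1,1)), ({3,4},(3,5)), ({1,2,4},(1,3)), ({1},(1,0)), ({1,3},(1,5)), ({1,3,4},(1,2))] else if j = 2 then [({1,2},(1,4)), ({1,3},(1,5)), ({1,4},(1,1)), ({1,2,4},(1,3)), ({1,3,4},(1,2)), ({1,2,3,4},(2,4)), ({1},(1,0)), ({2,4},(2,5)), ({2,3,4},(2,1)), ({2},(2,0)), ({2,3},(2,3)), ({1,2,3},(2,2))] else if j = 3 then [({3},(3,3)), ({1,3},(3,5)), ({2,3},(3,4)), ({3,4},(4,3)), ({1,2,3},(3,2)), ({1,2,4},(4,0)), ({1,3,4},(4,5)), ({2,3,4},(3,0)), ({1,4},(4,2)), ({2,4},(4,1)), ({1,2,3,4},(3,1)), ({4},(4,4))] else [({1,2},(1,4)), ({1,3},(1,5)), ({3,4},(4,3)), ({1,2,3},(1,2)), ({1,3,4},(4,5)), ({2,3,4},(4,0)), ({1,2,3,4},(4,2)), ({1,4},(1,1)), ({2,4},(4,1)), ({1,2,4},(1,3)), ({1},(1,0)), ({4},(4,4))])"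

definition iniV5 :: "4 \<Rightarrow> piece list" where
  "iniV5 j = (if j = 1 then [(4,0), (4,1), (4,2), (4,3), (4,4), (4,5)] else if j = 2 then [(3,0), (3,1), (3,2), (3,3), (3,4), (3,5), (4,0), (4,1), (4,2), (4,3), (4,4), (4,5)] else if j = 3 then [(1,0), (1,1), (1,2), (1,3), (1,4), (1,5), (2,0), (2,1), (2,2), (2,3), (2,4), (2,5)] else [(2,0), (2,1), (2,2), (2,3), (2,4), (2,5), (3,0), (3,1), (3,2), (3,3), (3,4), (3,5)])"

lemma zcodeV5: "0 < s \<Longrightarrow> zcode Kinst id Ainst (\<lambda>j. PiE {..<wV5 j} (\<lambda>_. {0..<s})) {0..<s} (lenc s tabV5) (ldec s tabV5 stepsV5 wV5)"
proof (rule zcode_lin)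
  show "fst q \<in> k \<and> snd q < wV5 (fst q)" if "q \<in> set (tabV5 k)" for k q
    using that unfolding tabV5_def by (auto split: if_splits simp: wV5_def)
  show "fst q \<in> Ainst j" if "q \<in> set (iniV5 j)" for j q
    using that unfolding iniV5_def by (auto split: if_splits simp: Ainst_def)
  show "\<exists>kn'. chk tabV5 (iniV5 j) (stepsV5 j) = Some kn' \<and> list_all (\<lambda>i. (j,i) \<in> set kn') [0..<wV5 j]" for j
    using exhaust4[of j] by (elim disjE) (simp_all add: stepsV5_def iniV5_def tabV5_def wV5_def upt_rec)
qed

definition wV6 :: "4 \<Rightarrow> nat" where "wV6 j = (if j = 1 then 8 else if j = 2 then 4 else if j = 3 then 4 else 4)"

definition tabV6 :: "4 set \<Rightarrow> piece list" where
  "tabV6 k = (if 1 \<in> k \<and> 2 \<notin> k \<and> 3 \<notin> k \<and> 4 \<notin> k then [(1,3), (1,4), (1,5)] else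
    if 1 \<notin> k \<and> 2 \<in> k \<and> 3 \<notin> k \<and> 4 \<notin> k then [(2,1)] else
    if 1 \<notin> k \<and> 2 \<notin> k \<and> 3 \<in> k \<and> 4 \<notin> k then [(3,0), (3,1), (3,2), (3,3)] else
    if 1 \<notin> k \<and> 2 \<notin> k \<and> 3 \<notin> k \<and> 4 \<in> k then [(4,1), (4,3)] else
    if 1 \<in> k \<and> 2 \<in> k \<and> 3 \<notin> k \<and> 4 \<notin> k then [(1,5)] else
    if 1 \<in> k \<and> 2 \<notin> k \<and> 3 \<in> k \<and> 4 \<notin> k then [(1,0), (1,1), (1,4), (1,7)] else
    if 1 \<in> k \<and> 2 \<notin> k \<and> 3 \<notin> k \<and> 4 \<in> k then [(1,0), (1,5), (1,6), (4,1)] else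
    if 1 \<notin> k \<and> 2 \<in> k \<and> 3 \<in> k \<and> 4 \<notin> k then [(2,2), (3,2)] else
    if 1 \<notin> k \<and> 2 \<in> k \<and> 3 \<notin> k \<and> 4 \<in> k then [(2,3), (4,1), (4,2)] else
    if 1 \<notin> k \<and> 2 \<notin> k \<and> 3 \<in> k \<and> 4 \<in> k then [(3,1), (3,3), (4,0), (4,1)] else
    if 1 \<in> k \<and> 2 \<in> k \<and> 3 \<in> k \<and> 4 \<notin> k then [(1,2), (1,5)] else
    if 1 \<in> k \<and> 2 \<in> k \<and> 3 \<notin> k \<and> 4 \<in> k then [(1,3)] else
    if 1 \<in> k \<and> 2 \<notin> k \<and> 3 \<in> k \<and> 4 \<in> k then [(1,2), (1,6), (1,7), (4,0)] else
    if 1 \<notin> k \<and> 2 \<in> k \<and> 3 \<in> k \<and> 4 \<in> k then [(2,0), (2,3), (3,3), (4,2)] else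
    if 1 \<in> k \<and> 2 \<in> k \<and> 3 \<in> k \<and> 4 \<in> k then [(1,0)] else [])"

definition stepsV6 :: "4 \<Rightarrow> (4 set \<times> piece) list" where
  "stepsV6 j = (if j = 1 then [({2},(2,1)), ({1,2},(1,5)), ({2,4},(2,3)), ({1,2,3},(1,2)), ({1,2,4},(1,3)), ({1,2,3,4},(1,0)), ({1},(1,4)), ({1,4},(1,6)), ({1,3,4},(1,7)), ({1,3},(1,1))] else if j = 2 then [({2},(2,1)), ({1,2},(1,5)), ({2,3},(2,2)), ({2,4},(2,3)), ({1,2,3},(1,2)), ({1,2,4},(1,3)), ({2,3,4},(2,0)), ({1,2,3,4},(1,0)), ({1},(1,4)), ({1,4},(1,6)), ({1,3,4},(1,7)), ({1,3},(1,1))] else if j = 3 then [({1,4},(4,1)), ({2,3},(3,2)), ({2,4},(4,2)), ({1,3,4},(4,0)), ({2,3,4},(3,3)), ({4},(4,3)), ({3,4},(3,1)), ({3},(3,0))] else [({1,2},(1,5)), ({1,2,3},(1,2)), ({1,2,4},(1,3)), ({2,3,4},(4,2)), ({1,2,3,4},(1,0)), ({1},(1,4)), ({2,4},(4,1)), ({3,4},(4,0)), ({4},(4,3)), ({1,4},(1,6)), ({1,3,4},(1,7)), ({1,3},(1,1))])"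

definition iniV6 :: "4 \<Rightarrow> piece list" where
  "iniV6 j = (if j = 1 then [(4,0), (4,1), (4,2), (4,3)] else if j = 2 then [(3,0), (3,1), (3,2), (3,3), (4,0), (4,1), (4,2), (4,3)] else if j = 3 then [(1,0), (1,1), (1,2), (1,3), (1,4), (1,5), (1,6), (1,7), (2,0), (2,1), (2,2), (2,3)] else [(2,0), (2,1), (2,2), (2,3), (3,0), (3,1), (3,2), (3,3)])"

lemma zcodeV6: "0 < s \<Longrightarrow> zcode Kinst id Ainst (\<lambda>j. PiE {..<wV6 j} (\<lambda>_. {0..<s})) {0..<s} (lenc s tabV6) (ldec s tabV6 stepsV6 wV6)"
proof (rule zcode_lin)
  show "fst q \<in> k \<and> snd q < wV6 (fst q)" if "q \<in> set (tabV6 k)" for k q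
    using that unfolding tabV6_def by (auto split: if_splits simp: wV6_def)
  show "fst q \<in> Ainst j" if "q \<in> set (iniV6 j)" for j q
    using that unfolding iniV6_def by (auto split: if_splits simp: Ainst_def)
  show "\<exists>kn'. chk tabV6 (iniV6 j) (stepsV6 j) = Some kn' \<and> list_all (\<lambda>i. (j,i) \<in> set kn') [0..<wV6 j]" for j
    using exhaust4[of j] by (elim disjE) (simp_all add: stepsV6_def iniV6_def tabV6_def wV6_def upt_rec)
qed



lemma geo_leaf0:
  fixes x1 x2 x3 x4 :: real
  assumes "0 \<le> x1" "0 \<le> x2" "0 \<le> x3" "0 \<le> x4" "x1 \<le> 8" "x2 \<le> 8" "x3 \<le> 8" "x4 \<le> 8"
    "x1 + x2 \<le> 12" "x1 + x3 \<le> 12" "x1 + x4 \<le> 12" "x3 + x4 \<le> 12" "x1 + x2 + x3 \<le> 18"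
    "(1) * x1 + (0) * x3 \<le> (4)" "(0) * x1 + (1) * x3 \<le> (4)" "(1) * x1 + (-1) * x3 \<le> (0)"
  shows "\<exists>a b c d e f::real. 0 \<le> a \<and> 0 \<le> b \<and> 0 \<le> c \<and> 0 \<le> d \<and> 0 \<le> e \<and> 0 \<le> f \<and> a + b + c + d + e + f \<le> 1 \<and>
      x1 \<le> 2*a + 4*b + 4*c + 4*d + 6*e + 8*f \<and> x2 \<le> 8*a + 6*b + 8*c + 8*d + 6*e + 4*f \<and>
      x3 \<le> 8*a + 8*b + 4*c + 6*d + 6*e + 4*f \<and> x4 \<le> 4*a + 4*b + 8*c + 6*d + 6*e + 4*f"
  apply (rule exI[of _ "((0) * x1 + (0) * x3 + (0))"], rule exI[of _ "((0) * x1 + (0) * x3 + (0))"], rule exI[of _ "((0) * x1 + (0) * x3 + (1))"], rule exI[of _ "((0) * x1 + (0) * x3 + (0))"], rule exI[of _ "((0) * x1 + (0) * x3 + (0))"], rule exI[of _ "((0) * x1 + (0) * x3 + (0))"])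
  using assms by (intro conjI; (simp add: algebra_simps)?; linarith)

lemma geo_leaf1:
  fixes x1 x2 x3 x4 :: real
  assumes "0 \<le> x1" "0 \<le> x2" "0 \<le> x3" "0 \<le> x4" "x1 \<le> 8" "x2 \<le> 8" "x3 \<le> 8" "x4 \<le> 8"
    "x1 + x2 \<le> 12" "x1 + x3 \<le> 12" "x1 + x4 \<le> 12" "x3 + x4 \<le> 12" "x1 + x2 + x3 \<le> 18"
    "(1) * x1 + (0) * x3 \<le> (4)" "(0) * x1 + (1) * x3 \<le> (4)" "(1) * x1 + (-1) * x3 \<ge> (0)"
  shows "\<exists>a b c d e f::real. 0 \<le> a \<and> 0 \<le> b \<and> 0 \<le> c \<and> 0 \<le> d \<and> 0 \<le> e \<and> 0 \<le> f \<and> a + b + c + d + e + f \<le> 1 \<and>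
      x1 \<le> 2*a + 4*b + 4*c + 4*d + 6*e + 8*f \<and> x2 \<le> 8*a + 6*b + 8*c + 8*d + 6*e + 4*f \<and>
      x3 \<le> 8*a + 8*b + 4*c + 6*d + 6*e + 4*f \<and> x4 \<le> 4*a + 4*b + 8*c + 6*d + 6*e + 4*f"
  apply (rule exI[of _ "((0) * x1 + (0) * x3 + (0))"], rule exI[of _ "((0) * x1 + (0) * x3 + (0))"], rule exI[of _ "((0) * x1 + (0) * x3 + (1))"], rule exI[of _ "((0) * x1 + (0) * x3 + (0))"], rule exI[of _ "((0) * x1 + (0) * x3 + (0))"], rule exI[of _ "((0) * x1 + (0) * x3 + (0))"])
  using assms by (intro conjI; (simp add: algebra_simps)?; linarith)

lemma geo_leaf2:
  fixes x1 x2 x3 x4 :: real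
  assumes "0 \<le> x1" "0 \<le> x2" "0 \<le> x3" "0 \<le> x4" "x1 \<le> 8" "x2 \<le> 8" "x3 \<le> 8" "x4 \<le> 8"
    "x1 + x2 \<le> 12" "x1 + x3 \<le> 12" "x1 + x4 \<le> 12" "x3 + x4 \<le> 12" "x1 + x2 + x3 \<le> 18"
    "(1) * x1 + (0) * x3 \<le> (4)" "(0) * x1 + (1) * x3 \<ge> (4)" "(0) * x1 + (1) * x3 \<le> (6)" "(2) * x1 + (4) * x3 \<le> (24)"
  shows "\<exists>a b c d e f::real. 0 \<le> a \<and> 0 \<le> b \<and> 0 \<le> c \<and> 0 \<le> d \<and> 0 \<le> e \<and> 0 \<le> f \<and> a + b + c + d + e + f \<le> 1 \<and>
      x1 \<le> 2*a + 4*b + 4*c + 4*d + 6*e + 8*f \<and> x2 \<le> 8*a + 6*b + 8*c + 8*d + 6*e + 4*f \<and>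
      x3 \<le> 8*a + 8*b + 4*c + 6*d + 6*e + 4*f \<and> x4 \<le> 4*a + 4*b + 8*c + 6*d + 6*e + 4*f"
  apply (rule exI[of _ "((0) * x1 + (0) * x3 + (0))"], rule exI[of _ "((0) * x1 + (0) * x3 + (0))"], rule exI[of _ "((0) * x1 + (-1/2) * x3 + (3))"], rule exI[of _ "((0) * x1 + (1/2) * x3 + (-2))"], rule exI[of _ "((0) * x1 + (0) * x3 + (0))"], rule exI[of _ "((0) * x1 + (0) * x3 + (0))"])
  using assms by (intro conjI; (simp add: algebra_simps)?; linarith)

lemma geo_leaf3:
  fixes x1 x2 x3 x4 :: real
  assumes "0 \<le> x1" "0 \<le> x2" "0 \<le> x3" "0 \<le> x4" "x1 \<le> 8" "x2 \<le> 8" "x3 \<le> 8" "x4 \<le> 8"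
    "x1 + x2 \<le> 12" "x1 + x3 \<le> 12" "x1 + x4 \<le> 12" "x3 + x4 \<le> 12" "x1 + x2 + x3 \<le> 18"
    "(1) * x1 + (0) * x3 \<le> (4)" "(0) * x1 + (1) * x3 \<ge> (4)" "(0) * x1 + (1) * x3 \<le> (6)" "(2) * x1 + (4) * x3 \<ge> (24)"
  shows "\<exists>a b c d e f::real. 0 \<le> a \<and> 0 \<le> b \<and> 0 \<le> c \<and> 0 \<le> d \<and> 0 \<le> e \<and> 0 \<le> f \<and> a + b + c + d + e + f \<le> 1 \<and>
      x1 \<le> 2*a + 4*b + 4*c + 4*d + 6*e + 8*f \<and> x2 \<le> 8*a + 6*b + 8*c + 8*d + 6*e + 4*f \<and>
      x3 \<le> 8*a + 8*b + 4*c + 6*d + 6*e + 4*f \<and> x4 \<le> 4*a + 4*b + 8*c + 6*d + 6*e + 4*f"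
  apply (rule exI[of _ "((0) * x1 + (0) * x3 + (0))"], rule exI[of _ "((0) * x1 + (0) * x3 + (0))"], rule exI[of _ "((0) * x1 + (-1/2) * x3 + (3))"], rule exI[of _ "((0) * x1 + (1/2) * x3 + (-2))"], rule exI[of _ "((0) * x1 + (0) * x3 + (0))"], rule exI[of _ "((0) * x1 + (0) * x3 + (0))"])
  using assms by (intro conjI; (simp add: algebra_simps)?; linarith)

lemma geo_leaf4:
  fixes x1 x2 x3 x4 :: real
  assumes "0 \<le> x1" "0 \<le> x2" "0 \<le> x3" "0 \<le> x4" "x1 \<le> 8" "x2 \<le> 8" "x3 \<le> 8" "x4 \<le> 8"
    "x1 + x2 \<le> 12" "x1 + x3 \<le> 12" "x1 + x4 \<le> 12" "x3 + x4 \<le> 12" "x1 + x2 + x3 \<le> 18"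
    "(1) * x1 + (0) * x3 \<le> (4)" "(0) * x1 + (1) * x3 \<ge> (4)" "(0) * x1 + (1) * x3 \<ge> (6)" "(1) * x1 + (1) * x3 \<le> (10)" "(2) * x1 + (4) * x3 \<le> (32)"
  shows "\<exists>a b c d e f::real. 0 \<le> a \<and> 0 \<le> b \<and> 0 \<le> c \<and> 0 \<le> d \<and> 0 \<le> e \<and> 0 \<le> f \<and> a + b + c + d + e + f \<le> 1 \<and>
      x1 \<le> 2*a + 4*b + 4*c + 4*d + 6*e + 8*f \<and> x2 \<le> 8*a + 6*b + 8*c + 8*d + 6*e + 4*f \<and>
      x3 \<le> 8*a + 8*b + 4*c + 6*d + 6*e + 4*f \<and> x4 \<le> 4*a + 4*b + 8*c + 6*d + 6*e + 4*f"
  apply (rule exI[of _ "((0) * x1 + (1/2) * x3 + (-3))"], rule exI[of _ "((0) * x1 + (0) * x3 + (0))"], rule exI[of _ "((0) * x1 + (0) * x3 + (0))"], rule exI[of _ "((0) * x1 + (-1/2) * x3 + (4))"], rule exI[of _ "((0) * x1 + (0) * x3 + (0))"], rule exI[of _ "((0) * x1 + (0) * x3 + (0))"])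
  using assms by (intro conjI; (simp add: algebra_simps)?; linarith)

lemma geo_leaf5:
  fixes x1 x2 x3 x4 :: real
  assumes "0 \<le> x1" "0 \<le> x2" "0 \<le> x3" "0 \<le> x4" "x1 \<le> 8" "x2 \<le> 8" "x3 \<le> 8" "x4 \<le> 8"
    "x1 + x2 \<le> 12" "x1 + x3 \<le> 12" "x1 + x4 \<le> 12" "x3 + x4 \<le> 12" "x1 + x2 + x3 \<le> 18"
    "(1) * x1 + (0) * x3 \<le> (4)" "(0) * x1 + (1) * x3 \<ge> (4)" "(0) * x1 + (1) * x3 \<ge> (6)" "(1) * x1 + (1) * x3 \<le> (10)" "(2) * x1 + (4) * x3 \<ge> (32)"
  shows "\<exists>a b c d e f::real. 0 \<le> a \<and> 0 \<le> b \<and> 0 \<le> c \<and> 0 \<le> d \<and> 0 \<le> e \<and> 0 \<le> f \<and> a + b + c + d + e + f \<le> 1 \<and>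
      x1 \<le> 2*a + 4*b + 4*c + 4*d + 6*e + 8*f \<and> x2 \<le> 8*a + 6*b + 8*c + 8*d + 6*e + 4*f \<and>
      x3 \<le> 8*a + 8*b + 4*c + 6*d + 6*e + 4*f \<and> x4 \<le> 4*a + 4*b + 8*c + 6*d + 6*e + 4*f"
  apply (rule exI[of _ "((0) * x1 + (1/2) * x3 + (-3))"], rule exI[of _ "((0) * x1 + (0) * x3 + (0))"], rule exI[of _ "((0) * x1 + (0) * x3 + (0))"], rule exI[of _ "((0) * x1 + (-1/2) * x3 + (4))"], rule exI[of _ "((0) * x1 + (0) * x3 + (0))"], rule exI[of _ "((0) * x1 + (0) * x3 + (0))"])
  using assms by (intro conjI; (simp add: algebra_simps)?; linarith)

lemma geo_leaf6:
  fixes x1 x2 x3 x4 :: real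
  assumes "0 \<le> x1" "0 \<le> x2" "0 \<le> x3" "0 \<le> x4" "x1 \<le> 8" "x2 \<le> 8" "x3 \<le> 8" "x4 \<le> 8"
    "x1 + x2 \<le> 12" "x1 + x3 \<le> 12" "x1 + x4 \<le> 12" "x3 + x4 \<le> 12" "x1 + x2 + x3 \<le> 18"
    "(1) * x1 + (0) * x3 \<le> (4)" "(0) * x1 + (1) * x3 \<ge> (4)" "(0) * x1 + (1) * x3 \<ge> (6)" "(1) * x1 + (1) * x3 \<ge> (10)"
  shows "\<exists>a b c d e f::real. 0 \<le> a \<and> 0 \<le> b \<and> 0 \<le> c \<and> 0 \<le> d \<and> 0 \<le> e \<and> 0 \<le> f \<and> a + b + c + d + e + f \<le> 1 \<and>
      x1 \<le> 2*a + 4*b + 4*c + 4*d + 6*e + 8*f \<and> x2 \<le> 8*a + 6*b + 8*c + 8*d + 6*e + 4*f \<and>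
      x3 \<le> 8*a + 8*b + 4*c + 6*d + 6*e + 4*f \<and> x4 \<le> 4*a + 4*b + 8*c + 6*d + 6*e + 4*f"
  apply (rule exI[of _ "((-1/2) * x1 + (0) * x3 + (2))"], rule exI[of _ "((1/2) * x1 + (1/2) * x3 + (-5))"], rule exI[of _ "((0) * x1 + (0) * x3 + (0))"], rule exI[of _ "((0) * x1 + (-1/2) * x3 + (4))"], rule exI[of _ "((0) * x1 + (0) * x3 + (0))"], rule exI[of _ "((0) * x1 + (0) * x3 + (0))"])
  using assms by (intro conjI; (simp add: algebra_simps)?; linarith)

lemma geo_leaf7:
  fixes x1 x2 x3 x4 :: real
  assumes "0 \<le> x1" "0 \<le> x2" "0 \<le> x3" "0 \<le> x4" "x1 \<le> 8" "x2 \<le> 8" "x3 \<le> 8" "x4 \<le> 8"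
    "x1 + x2 \<le> 12" "x1 + x3 \<le> 12" "x1 + x4 \<le> 12" "x3 + x4 \<le> 12" "x1 + x2 + x3 \<le> 18"
    "(1) * x1 + (0) * x3 \<ge> (4)" "(0) * x1 + (1) * x3 \<le> (4)" "(1) * x1 + (1) * x3 \<le> (10)" "(2) * x1 + (-4) * x3 \<le> (8)" "(4) * x1 + (-2) * x3 \<le> (16)"
  shows "\<exists>a b c d e f::real. 0 \<le> a \<and> 0 \<le> b \<and> 0 \<le> c \<and> 0 \<le> d \<and> 0 \<le> e \<and> 0 \<le> f \<and> a + b + c + d + e + f \<le> 1 \<and>
      x1 \<le> 2*a + 4*b + 4*c + 4*d + 6*e + 8*f \<and> x2 \<le> 8*a + 6*b + 8*c + 8*d + 6*e + 4*f \<and>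
      x3 \<le> 8*a + 8*b + 4*c + 6*d + 6*e + 4*f \<and> x4 \<le> 4*a + 4*b + 8*c + 6*d + 6*e + 4*f"
  apply (rule exI[of _ "((0) * x1 + (0) * x3 + (0))"], rule exI[of _ "((0) * x1 + (0) * x3 + (0))"], rule exI[of _ "((-1/2) * x1 + (0) * x3 + (3))"], rule exI[of _ "((0) * x1 + (0) * x3 + (0))"], rule exI[of _ "((1/2) * x1 + (0) * x3 + (-2))"], rule exI[of _ "((0) * x1 + (0) * x3 + (0))"])
  using assms by (intro conjI; (simp add: algebra_simps)?; linarith)

lemma geo_leaf8:
  fixes x1 x2 x3 x4 :: real
  assumes "0 \<le> x1" "0 \<le> x2" "0 \<le> x3" "0 \<le> x4" "x1 \<le> 8" "x2 \<le> 8" "x3 \<le> 8" "x4 \<le> 8"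
    "x1 + x2 \<le> 12" "x1 + x3 \<le> 12" "x1 + x4 \<le> 12" "x3 + x4 \<le> 12" "x1 + x2 + x3 \<le> 18"
    "(1) * x1 + (0) * x3 \<ge> (4)" "(0) * x1 + (1) * x3 \<le> (4)" "(1) * x1 + (1) * x3 \<le> (10)" "(2) * x1 + (-4) * x3 \<le> (8)" "(4) * x1 + (-2) * x3 \<ge> (16)"
  shows "\<exists>a b c d e f::real. 0 \<le> a \<and> 0 \<le> b \<and> 0 \<le> c \<and> 0 \<le> d \<and> 0 \<le> e \<and> 0 \<le> f \<and> a + b + c + d + e + f \<le> 1 \<and>
      x1 \<le> 2*a + 4*b + 4*c + 4*d + 6*e + 8*f \<and> x2 \<le> 8*a + 6*b + 8*c + 8*d + 6*e + 4*f \<and>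
      x3 \<le> 8*a + 8*b + 4*c + 6*d + 6*e + 4*f \<and> x4 \<le> 4*a + 4*b + 8*c + 6*d + 6*e + 4*f"
  apply (rule exI[of _ "((0) * x1 + (0) * x3 + (0))"], rule exI[of _ "((0) * x1 + (0) * x3 + (0))"], rule exI[of _ "((-1/6) * x1 + (-1/6) * x3 + (5/3))"], rule exI[of _ "((0) * x1 + (0) * x3 + (0))"], rule exI[of _ "((-1/6) * x1 + (1/3) * x3 + (2/3))"], rule exI[of _ "((1/3) * x1 + (-1/6) * x3 + (-4/3))"])
  using assms by (intro conjI; (simp add: algebra_simps)?; linarith)

lemma geo_leaf9:
  fixes x1 x2 x3 x4 :: real
  assumes "0 \<le> x1" "0 \<le> x2" "0 \<le> x3" "0 \<le> x4" "x1 \<le> 8" "x2 \<le> 8" "x3 \<le> 8" "x4 \<le> 8"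
    "x1 + x2 \<le> 12" "x1 + x3 \<le> 12" "x1 + x4 \<le> 12" "x3 + x4 \<le> 12" "x1 + x2 + x3 \<le> 18"
    "(1) * x1 + (0) * x3 \<ge> (4)" "(0) * x1 + (1) * x3 \<le> (4)" "(1) * x1 + (1) * x3 \<le> (10)" "(2) * x1 + (-4) * x3 \<ge> (8)"
  shows "\<exists>a b c d e f::real. 0 \<le> a \<and> 0 \<le> b \<and> 0 \<le> c \<and> 0 \<le> d \<and> 0 \<le> e \<and> 0 \<le> f \<and> a + b + c + d + e + f \<le> 1 \<and>
      x1 \<le> 2*a + 4*b + 4*c + 4*d + 6*e + 8*f \<and> x2 \<le> 8*a + 6*b + 8*c + 8*d + 6*e + 4*f \<and>
      x3 \<le> 8*a + 8*b + 4*c + 6*d + 6*e + 4*f \<and> x4 \<le> 4*a + 4*b + 8*c + 6*d + 6*e + 4*f"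
  apply (rule exI[of _ "((0) * x1 + (0) * x3 + (0))"], rule exI[of _ "((0) * x1 + (0) * x3 + (0))"], rule exI[of _ "((-1/4) * x1 + (0) * x3 + (2))"], rule exI[of _ "((0) * x1 + (0) * x3 + (0))"], rule exI[of _ "((0) * x1 + (0) * x3 + (0))"], rule exI[of _ "((1/4) * x1 + (0) * x3 + (-1))"])
  using assms by (intro conjI; (simp add: algebra_simps)?; linarith)

lemma geo_leaf10:
  fixes x1 x2 x3 x4 :: real
  assumes "0 \<le> x1" "0 \<le> x2" "0 \<le> x3" "0 \<le> x4" "x1 \<le> 8" "x2 \<le> 8" "x3 \<le> 8" "x4 \<le> 8"
    "x1 + x2 \<le> 12" "x1 + x3 \<le> 12" "x1 + x4 \<le> 12" "x3 + x4 \<le> 12" "x1 + x2 + x3 \<le> 18"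
    "(1) * x1 + (0) * x3 \<ge> (4)" "(0) * x1 + (1) * x3 \<le> (4)" "(1) * x1 + (1) * x3 \<ge> (10)"
  shows "\<exists>a b c d e f::real. 0 \<le> a \<and> 0 \<le> b \<and> 0 \<le> c \<and> 0 \<le> d \<and> 0 \<le> e \<and> 0 \<le> f \<and> a + b + c + d + e + f \<le> 1 \<and>
      x1 \<le> 2*a + 4*b + 4*c + 4*d + 6*e + 8*f \<and> x2 \<le> 8*a + 6*b + 8*c + 8*d + 6*e + 4*f \<and>
      x3 \<le> 8*a + 8*b + 4*c + 6*d + 6*e + 4*f \<and> x4 \<le> 4*a + 4*b + 8*c + 6*d + 6*e + 4*f"
  apply (rule exI[of _ "((0) * x1 + (0) * x3 + (0))"], rule exI[of _ "((0) * x1 + (0) * x3 + (0))"], rule exI[of _ "((0) * x1 + (0) * x3 + (0))"], rule exI[of _ "((0) * x1 + (0) * x3 + (0))"], rule exI[of _ "((-1/2) * x1 + (0) * x3 + (4))"], rule exI[of _ "((1/2) * x1 + (0) * x3 + (-3))"])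
  using assms by (intro conjI; (simp add: algebra_simps)?; linarith)

lemma geo_leaf11:
  fixes x1 x2 x3 x4 :: real
  assumes "0 \<le> x1" "0 \<le> x2" "0 \<le> x3" "0 \<le> x4" "x1 \<le> 8" "x2 \<le> 8" "x3 \<le> 8" "x4 \<le> 8"
    "x1 + x2 \<le> 12" "x1 + x3 \<le> 12" "x1 + x4 \<le> 12" "x3 + x4 \<le> 12" "x1 + x2 + x3 \<le> 18"
    "(1) * x1 + (0) * x3 \<ge> (4)" "(0) * x1 + (1) * x3 \<ge> (4)" "(0) * x1 + (1) * x3 \<le> (6)" "(1) * x1 + (1) * x3 \<le> (10)" "(1) * x1 + (-1) * x3 \<le> (0)"
  shows "\<exists>a b c d e f::real. 0 \<le> a \<and> 0 \<le> b \<and> 0 \<le> c \<and> 0 \<le> d \<and> 0 \<le> e \<and> 0 \<le> f \<and> a + b + c + d + e + f \<le> 1 \<and>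
      x1 \<le> 2*a + 4*b + 4*c + 4*d + 6*e + 8*f \<and> x2 \<le> 8*a + 6*b + 8*c + 8*d + 6*e + 4*f \<and>
      x3 \<le> 8*a + 8*b + 4*c + 6*d + 6*e + 4*f \<and> x4 \<le> 4*a + 4*b + 8*c + 6*d + 6*e + 4*f"
  apply (rule exI[of _ "((0) * x1 + (0) * x3 + (0))"], rule exI[of _ "((0) * x1 + (0) * x3 + (0))"], rule exI[of _ "((0) * x1 + (-1/2) * x3 + (3))"], rule exI[of _ "((-1/2) * x1 + (1/2) * x3 + (0))"], rule exI[of _ "((1/2) * x1 + (0) * x3 + (-2))"], rule exI[of _ "((0) * x1 + (0) * x3 + (0))"])
  using assms by (intro conjI; (simp add: algebra_simps)?; linarith)

lemma geo_leaf12: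
  fixes x1 x2 x3 x4 :: real
  assumes "0 \<le> x1" "0 \<le> x2" "0 \<le> x3" "0 \<le> x4" "x1 \<le> 8" "x2 \<le> 8" "x3 \<le> 8" "x4 \<le> 8"
    "x1 + x2 \<le> 12" "x1 + x3 \<le> 12" "x1 + x4 \<le> 12" "x3 + x4 \<le> 12" "x1 + x2 + x3 \<le> 18"
    "(1) * x1 + (0) * x3 \<ge> (4)" "(0) * x1 + (1) * x3 \<ge> (4)" "(0) * x1 + (1) * x3 \<le> (6)" "(1) * x1 + (1) * x3 \<le> (10)" "(1) * x1 + (-1) * x3 \<ge> (0)"
  shows "\<exists>a b c d e f::real. 0 \<le> a \<and> 0 \<le> b \<and> 0 \<le> c \<and> 0 \<le> d \<and> 0 \<le> e \<and> 0 \<le> f \<and> a + b + c + d + e + f \<le> 1 \<and>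
      x1 \<le> 2*a + 4*b + 4*c + 4*d + 6*e + 8*f \<and> x2 \<le> 8*a + 6*b + 8*c + 8*d + 6*e + 4*f \<and>
      x3 \<le> 8*a + 8*b + 4*c + 6*d + 6*e + 4*f \<and> x4 \<le> 4*a + 4*b + 8*c + 6*d + 6*e + 4*f"
  apply (rule exI[of _ "((0) * x1 + (0) * x3 + (0))"], rule exI[of _ "((0) * x1 + (0) * x3 + (0))"], rule exI[of _ "((-1/2) * x1 + (0) * x3 + (3))"], rule exI[of _ "((0) * x1 + (0) * x3 + (0))"], rule exI[of _ "((1/2) * x1 + (0) * x3 + (-2))"], rule exI[of _ "((0) * x1 + (0) * x3 + (0))"])
  using assms by (intro conjI; (simp add: algebra_simps)?; linarith)

lemma geo_leaf13:
  fixes x1 x2 x3 x4 :: real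
  assumes "0 \<le> x1" "0 \<le> x2" "0 \<le> x3" "0 \<le> x4" "x1 \<le> 8" "x2 \<le> 8" "x3 \<le> 8" "x4 \<le> 8"
    "x1 + x2 \<le> 12" "x1 + x3 \<le> 12" "x1 + x4 \<le> 12" "x3 + x4 \<le> 12" "x1 + x2 + x3 \<le> 18"
    "(1) * x1 + (0) * x3 \<ge> (4)" "(0) * x1 + (1) * x3 \<ge> (4)" "(0) * x1 + (1) * x3 \<le> (6)" "(1) * x1 + (1) * x3 \<ge> (10)" "(1) * x1 + (-1) * x3 \<le> (0)"
  shows "\<exists>a b c d e f::real. 0 \<le> a \<and> 0 \<le> b \<and> 0 \<le> c \<and> 0 \<le> d \<and> 0 \<le> e \<and> 0 \<le> f \<and> a + b + c + d + e + f \<le> 1 \<and>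
      x1 \<le> 2*a + 4*b + 4*c + 4*d + 6*e + 8*f \<and> x2 \<le> 8*a + 6*b + 8*c + 8*d + 6*e + 4*f \<and>
      x3 \<le> 8*a + 8*b + 4*c + 6*d + 6*e + 4*f \<and> x4 \<le> 4*a + 4*b + 8*c + 6*d + 6*e + 4*f"
  apply (rule exI[of _ "((0) * x1 + (0) * x3 + (0))"], rule exI[of _ "((0) * x1 + (0) * x3 + (0))"], rule exI[of _ "((0) * x1 + (-1/2) * x3 + (3))"], rule exI[of _ "((-1/2) * x1 + (1/2) * x3 + (0))"], rule exI[of _ "((1/2) * x1 + (0) * x3 + (-2))"], rule exI[of _ "((0) * x1 + (0) * x3 + (0))"])
  using assms by (intro conjI; (simp add: algebra_simps)?; linarith)

lemma geo_leaf14: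
  fixes x1 x2 x3 x4 :: real
  assumes "0 \<le> x1" "0 \<le> x2" "0 \<le> x3" "0 \<le> x4" "x1 \<le> 8" "x2 \<le> 8" "x3 \<le> 8" "x4 \<le> 8"
    "x1 + x2 \<le> 12" "x1 + x3 \<le> 12" "x1 + x4 \<le> 12" "x3 + x4 \<le> 12" "x1 + x2 + x3 \<le> 18"
    "(1) * x1 + (0) * x3 \<ge> (4)" "(0) * x1 + (1) * x3 \<ge> (4)" "(0) * x1 + (1) * x3 \<le> (6)" "(1) * x1 + (1) * x3 \<ge> (10)" "(1) * x1 + (-1) * x3 \<ge> (0)" "(1) * x1 + (3) * x3 \<le> (20)"
  shows "\<exists>a b c d e f::real. 0 \<le> a \<and> 0 \<le> b \<and> 0 \<le> c \<and> 0 \<le> d \<and> 0 \<le> e \<and> 0 \<le> f \<and> a + b + c + d + e + f \<le> 1 \<and>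
      x1 \<le> 2*a + 4*b + 4*c + 4*d + 6*e + 8*f \<and> x2 \<le> 8*a + 6*b + 8*c + 8*d + 6*e + 4*f \<and>
      x3 \<le> 8*a + 8*b + 4*c + 6*d + 6*e + 4*f \<and> x4 \<le> 4*a + 4*b + 8*c + 6*d + 6*e + 4*f"
  apply (rule exI[of _ "((0) * x1 + (0) * x3 + (0))"], rule exI[of _ "((0) * x1 + (0) * x3 + (0))"], rule exI[of _ "((0) * x1 + (1/2) * x3 + (-2))"], rule exI[of _ "((0) * x1 + (0) * x3 + (0))"], rule exI[of _ "((-1/2) * x1 + (-1) * x3 + (8))"], rule exI[of _ "((1/2) * x1 + (1/2) * x3 + (-5))"])
  using assms by (intro conjI; (simp add: algebra_simps)?; linarith)

lemma geo_leaf15: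
  fixes x1 x2 x3 x4 :: real
  assumes "0 \<le> x1" "0 \<le> x2" "0 \<le> x3" "0 \<le> x4" "x1 \<le> 8" "x2 \<le> 8" "x3 \<le> 8" "x4 \<le> 8"
    "x1 + x2 \<le> 12" "x1 + x3 \<le> 12" "x1 + x4 \<le> 12" "x3 + x4 \<le> 12" "x1 + x2 + x3 \<le> 18"
    "(1) * x1 + (0) * x3 \<ge> (4)" "(0) * x1 + (1) * x3 \<ge> (4)" "(0) * x1 + (1) * x3 \<le> (6)" "(1) * x1 + (1) * x3 \<ge> (10)" "(1) * x1 + (-1) * x3 \<ge> (0)" "(1) * x1 + (3) * x3 \<ge> (20)"
  shows "\<exists>a b c d e f::real. 0 \<le> a \<and> 0 \<le> b \<and> 0 \<le> c \<and> 0 \<le> d \<and> 0 \<le> e \<and> 0 \<le> f \<and> a + b + c + d + e + f \<le> 1 \<and>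
      x1 \<le> 2*a + 4*b + 4*c + 4*d + 6*e + 8*f \<and> x2 \<le> 8*a + 6*b + 8*c + 8*d + 6*e + 4*f \<and>
      x3 \<le> 8*a + 8*b + 4*c + 6*d + 6*e + 4*f \<and> x4 \<le> 4*a + 4*b + 8*c + 6*d + 6*e + 4*f"
  apply (rule exI[of _ "((0) * x1 + (0) * x3 + (0))"], rule exI[of _ "((0) * x1 + (0) * x3 + (0))"], rule exI[of _ "((-1/4) * x1 + (-1/4) * x3 + (3))"], rule exI[of _ "((0) * x1 + (0) * x3 + (0))"], rule exI[of _ "((0) * x1 + (1/2) * x3 + (-2))"], rule exI[of _ "((1/4) * x1 + (-1/4) * x3 + (0))"])
  using assms by (intro conjI; (simp add: algebra_simps)?; linarith)

lemma geo_leaf16: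
  fixes x1 x2 x3 x4 :: real
  assumes "0 \<le> x1" "0 \<le> x2" "0 \<le> x3" "0 \<le> x4" "x1 \<le> 8" "x2 \<le> 8" "x3 \<le> 8" "x4 \<le> 8"
    "x1 + x2 \<le> 12" "x1 + x3 \<le> 12" "x1 + x4 \<le> 12" "x3 + x4 \<le> 12" "x1 + x2 + x3 \<le> 18"
    "(1) * x1 + (0) * x3 \<ge> (4)" "(0) * x1 + (1) * x3 \<ge> (4)" "(0) * x1 + (1) * x3 \<ge> (6)"
  shows "\<exists>a b c d e f::real. 0 \<le> a \<and> 0 \<le> b \<and> 0 \<le> c \<and> 0 \<le> d \<and> 0 \<le> e \<and> 0 \<le> f \<and> a + b + c + d + e + f \<le> 1 \<and>
      x1 \<le> 2*a + 4*b + 4*c + 4*d + 6*e + 8*f \<and> x2 \<le> 8*a + 6*b + 8*c + 8*d + 6*e + 4*f \<and>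
      x3 \<le> 8*a + 8*b + 4*c + 6*d + 6*e + 4*f \<and> x4 \<le> 4*a + 4*b + 8*c + 6*d + 6*e + 4*f"
  apply (rule exI[of _ "((0) * x1 + (0) * x3 + (0))"], rule exI[of _ "((0) * x1 + (1/2) * x3 + (-3))"], rule exI[of _ "((0) * x1 + (0) * x3 + (0))"], rule exI[of _ "((-1/2) * x1 + (-1/2) * x3 + (6))"], rule exI[of _ "((1/2) * x1 + (0) * x3 + (-2))"], rule exI[of _ "((0) * x1 + (0) * x3 + (0))"])
  using assms by (intro conjI; (simp add: algebra_simps)?; linarith)

lemma geo_decomp:
  fixes x1 x2 x3 x4 :: real
  assumes H: "0 \<le> x1" "0 \<le> x2" "0 \<le> x3" "0 \<le> x4" "x1 \<le> 8" "x2 \<le> 8" "x3 \<le> 8" "x4 \<le> 8"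
    "x1 + x2 \<le> 12" "x1 + x3 \<le> 12" "x1 + x4 \<le> 12" "x3 + x4 \<le> 12" "x1 + x2 + x3 \<le> 18"
  shows "\<exists>a b c d e f::real. 0 \<le> a \<and> 0 \<le> b \<and> 0 \<le> c \<and> 0 \<le> d \<and> 0 \<le> e \<and> 0 \<le> f \<and> a + b + c + d + e + f \<le> 1 \<and>
      x1 \<le> 2*a + 4*b + 4*c + 4*d + 6*e + 8*f \<and> x2 \<le> 8*a + 6*b + 8*c + 8*d + 6*e + 4*f \<and>
      x3 \<le> 8*a + 8*b + 4*c + 6*d + 6*e + 4*f \<and> x4 \<le> 4*a + 4*b + 8*c + 6*d + 6*e + 4*f"
proof -
  show ?thesis
  proof (cases "(1) * x1 + (0) * x3 \<le> (4)")
    case c0: True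
    show ?thesis
    proof (cases "(0) * x1 + (1) * x3 \<le> (4)")
      case c1: True
      show ?thesis
      proof (cases "(1) * x1 + (-1) * x3 \<le> (0)")
        case c2: True
        show ?thesis by (rule geo_leaf0[of x1 x2 x3 x4]) (use H c0 c1 c2 in linarith)+
      next
        case c2: False
        show ?thesis by (rule geo_leaf1[of x1 x2 x3 x4]) (use H c0 c1 c2 in linarith)+
      qed
    next
      case c1: False
      show ?thesis
      proof (cases "(0) * x1 + (1) * x3 \<le> (6)")
        case c2: True
        show ?thesis
        proof (cases "(2) * x1 + (4) * x3 \<le> (24)")
          case c3: True
          show ?thesis by (rule geo_leaf2[of x1 x2 x3 x4]) (use H c0 c1 c2 c3 in linarith)+
        next
          case c3: False
          show ?thesis by (rule geo_leaf3[of x1 x2 x3 x4]) (use H c0 c1 c2 c3 in linarith)+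
        qed
      next
        case c2: False
        show ?thesis
        proof (cases "(1) * x1 + (1) * x3 \<le> (10)")
          case c3: True
          show ?thesis
          proof (cases "(2) * x1 + (4) * x3 \<le> (32)")
            case c4: True
            show ?thesis by (rule geo_leaf4[of x1 x2 x3 x4]) (use H c0 c1 c2 c3 c4 in linarith)+
          next
            case c4: False
            show ?thesis by (rule geo_leaf5[of x1 x2 x3 x4]) (use H c0 c1 c2 c3 c4 in linarith)+
          qed
        next
          case c3: False
          show ?thesis by (rule geo_leaf6[of x1 x2 x3 x4]) (use H c0 c1 c2 c3 in linarith)+
        qed
      qed
    qed
  next
    case c0: False
    show ?thesis
    proof (cases "(0) * x1 + (1) * x3 \<le> (4)")
      case c1: True
      show ?thesis
      proof (cases "(1) * x1 + (1) * x3 \<le> (10)")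
        case c2: True
        show ?thesis
        proof (cases "(2) * x1 + (-4) * x3 \<le> (8)")
          case c3: True
          show ?thesis
          proof (cases "(4) * x1 + (-2) * x3 \<le> (16)")
            case c4: True
            show ?thesis by (rule geo_leaf7[of x1 x2 x3 x4]) (use H c0 c1 c2 c3 c4 in linarith)+
          next
            case c4: False
            show ?thesis by (rule geo_leaf8[of x1 x2 x3 x4]) (use H c0 c1 c2 c3 c4 in linarith)+
          qed
        next
          case c3: False
          show ?thesis by (rule geo_leaf9[of x1 x2 x3 x4]) (use H c0 c1 c2 c3 in linarith)+
        qed
      next
        case c2: False
        show ?thesis by (rule geo_leaf10[of x1 x2 x3 x4]) (use H c0 c1 c2 in linarith)+
      qed
    next
      case c1: False
      show ?thesis
      proof (cases "(0) * x1 + (1) * x3 \<le> (6)")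
        case c2: True
        show ?thesis
        proof (cases "(1) * x1 + (1) * x3 \<le> (10)")
          case c3: True
          show ?thesis
          proof (cases "(1) * x1 + (-1) * x3 \<le> (0)")
            case c4: True
            show ?thesis by (rule geo_leaf11[of x1 x2 x3 x4]) (use H c0 c1 c2 c3 c4 in linarith)+
          next
            case c4: False
            show ?thesis by (rule geo_leaf12[of x1 x2 x3 x4]) (use H c0 c1 c2 c3 c4 in linarith)+
          qed
        next
          case c3: False
          show ?thesis
          proof (cases "(1) * x1 + (-1) * x3 \<le> (0)")
            case c4: True
            show ?thesis by (rule geo_leaf13[of x1 x2 x3 x4]) (use H c0 c1 c2 c3 c4 in linarith)+
          next
            case c4: False
            show ?thesis
            proof (cases "(1) * x1 + (3) * x3 \<le> (20)")
              case c5: True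
              show ?thesis by (rule geo_leaf14[of x1 x2 x3 x4]) (use H c0 c1 c2 c3 c4 c5 in linarith)+
            next
              case c5: False
              show ?thesis by (rule geo_leaf15[of x1 x2 x3 x4]) (use H c0 c1 c2 c3 c4 c5 in linarith)+
            qed
          qed
        qed
      next
        case c2: False
        show ?thesis by (rule geo_leaf16[of x1 x2 x3 x4]) (use H c0 c1 c2 in linarith)+
      qed
    qed
  qed
qed




lemma zcode_prod:
  assumes z1: "zcode K S A M L e d" and z2: "zcode K S A M' L' e' d'"
  shows "zcode K S A (\<lambda>j. M j \<times> M' j) (L \<times> L')
     (\<lambda>k mm. (e k (\<lambda>i\<in>S k. fst (mm i)), e' k (\<lambda>i\<in>S k. snd (mm i))))
     (\<lambda>j l sd. (d j (\<lambda>k\<in>K. fst (l k)) (\<lambda>i\<in>A j. fst (sd i)), d' j (\<lambda>k\<in>K. snd (l k)) (\<lambda>i\<in>A j. snd (sd i))))"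
  unfolding zcode_def
proof (intro allI impI conjI ballI)
  fix m assume m: "\<forall>j. m j \<in> M j \<times> M' j"
  define m1 where "m1 = (\<lambda>i. fst (m i))"
  define m2 where "m2 = (\<lambda>i. snd (m i))"
  have m1: "\<forall>j. m1 j \<in> M j" and m2: "\<forall>j. m2 j \<in> M' j" using m by (auto simp: m1_def m2_def mem_Times_iff)
  have r1: "(\<lambda>i\<in>T. fst (restrict m T i)) = restrict m1 T" for T by (auto simp: m1_def)
  have r2: "(\<lambda>i\<in>T. snd (restrict m T i)) = restrict m2 T" for T by (auto simp: m2_def)
  from z1 m1 have e1: "\<forall>k\<in>K. e k (restrict m1 (S k)) \<in> L"
     and d1: "\<forall>j. d j (\<lambda>k\<in>K. e k (restrict m1 (S k))) (restrict m1 (A j)) = m1 j"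
    unfolding zcode_def by blast+
  from z2 m2 have e2: "\<forall>k\<in>K. e' k (restrict m2 (S k)) \<in> L'"
     and d2: "\<forall>j. d' j (\<lambda>k\<in>K. e' k (restrict m2 (S k))) (restrict m2 (A j)) = m2 j"
    unfolding zcode_def by blast+
  fix k assume "k \<in> K"
  then show "(e k (\<lambda>i\<in>S k. fst (restrict m (S k) i)), e' k (\<lambda>i\<in>S k. snd (restrict m (S k) i))) \<in> L \<times> L'"
    unfolding r1 r2 using e1 e2 by simp
next
  fix m assume m: "\<forall>j. m j \<in> M j \<times> M' j"
  define m1 where "m1 = (\<lambda>i. fst (m i))"
  define m2 where "m2 = (\<lambda>i. snd (m i))"
  have m1: "\<forall>j. m1 j \<in> M j" and m2: "\<forall>j. m2 j \<in> M' j" using m by (auto simp: m1_def m2_def mem_Times_iff)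
  have r1: "(\<lambda>i\<in>T. fst (restrict m T i)) = restrict m1 T" for T by (auto simp: m1_def)
  have r2: "(\<lambda>i\<in>T. snd (restrict m T i)) = restrict m2 T" for T by (auto simp: m2_def)
  from z1 m1 have d1: "\<forall>j. d j (\<lambda>k\<in>K. e k (restrict m1 (S k))) (restrict m1 (A j)) = m1 j"
    unfolding zcode_def by blast+
  from z2 m2 have d2: "\<forall>j. d' j (\<lambda>k\<in>K. e' k (restrict m2 (S k))) (restrict m2 (A j)) = m2 j"
    unfolding zcode_def by blast+
  fix j
  have l1: "(\<lambda>k\<in>K. fst ((\<lambda>k\<in>K. (e k (\<lambda>i\<in>S k. fst (restrict m (S k) i)), e' k (\<lambda>i\<in>S k. snd (restrict m (S k) i)))) k))
      = (\<lambda>k\<in>K. e k (restrict m1 (S k)))" unfolding r1 r2 by (rule restrict_ext) simp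
  have l2: "(\<lambda>k\<in>K. snd ((\<lambda>k\<in>K. (e k (\<lambda>i\<in>S k. fst (restrict m (S k) i)), e' k (\<lambda>i\<in>S k. snd (restrict m (S k) i)))) k))
      = (\<lambda>k\<in>K. e' k (restrict m2 (S k)))" unfolding r1 r2 by (rule restrict_ext) simp
  show "(d j (\<lambda>k\<in>K. fst ((\<lambda>k\<in>K. (e k (\<lambda>i\<in>S k. fst (restrict m (S k) i)), e' k (\<lambda>i\<in>S k. snd (restrict m (S k) i)))) k))
           (\<lambda>i\<in>A j. fst (restrict m (A j) i)),
        d' j (\<lambda>k\<in>K. snd ((\<lambda>k\<in>K. (e k (\<lambda>i\<in>S k. fst (restrict m (S k) i)), e' k (\<lambda>i\<in>S k. snd (restrict m (S k) i)))) k))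
           (\<lambda>i\<in>A j. snd (restrict m (A j) i))) = m j"
    unfolding l1 l2 unfolding r1 r2 using d1 d2 by (simp add: m1_def m2_def)
qed

lemma card_msg_set: "card (msg_set n R j) = 2 ^ nat \<lceil>real n * R $ j\<rceil>"
  by (simp add: msg_set_def)

lemma zcode_transfer:
  fixes R :: "real^'n" and M :: "'n \<Rightarrow> 'a set" and L :: "'b set" and K :: "'k set"
  assumes z: "zcode K S A M L e d" and fM: "\<And>j. finite (M j)" and fL: "finite L"
    and cM: "\<And>j. 2 ^ nat \<lceil>real n * R $ j\<rceil> \<le> card (M j)"
    and cL: "\<And>k. k \<in> K \<Longrightarrow> card L \<le> 2 ^ nat \<lfloor>real n * C k\<rfloor>"
  shows "\<exists>f g. valid_encoders n R K S C f \<and> error_prob n R K S A f g = 0"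
proof -
  have "\<forall>j. \<exists>\<iota>. \<iota> ` msg_set n R j \<subseteq> M j \<and> inj_on \<iota> (msg_set n R j)"
  proof
    fix j show "\<exists>\<iota>. \<iota> ` msg_set n R j \<subseteq> M j \<and> inj_on \<iota> (msg_set n R j)"
      by (rule card_le_inj) (auto simp: msg_set_def fM cM[unfolded card_msg_set])
  qed
  then obtain \<iota> where \<iota>1: "\<And>j. \<iota> j ` msg_set n R j \<subseteq> M j" and \<iota>2: "\<And>j. inj_on (\<iota> j) (msg_set n R j)"
    by metis
  have "\<forall>k. \<exists>lm. k \<in> K \<longrightarrow> lm ` L \<subseteq> link_set n (C k) \<and> inj_on lm L"
  proof
    fix k show "\<exists>lm. k \<in> K \<longrightarrow> lm ` L \<subseteq> link_set n (C k) \<and> inj_on lm L"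
    proof (cases "k \<in> K")
      case True
      have "\<exists>lm. lm ` L \<subseteq> link_set n (C k) \<and> inj_on lm L"
        by (rule card_le_inj) (use True cL fL in \<open>auto simp: link_set_def\<close>)
      then show ?thesis by blast
    qed simp
  qed
  then obtain lm where lm1: "\<And>k. k \<in> K \<Longrightarrow> lm k ` L \<subseteq> link_set n (C k)"
     and lm2: "\<And>k. k \<in> K \<Longrightarrow> inj_on (lm k) L"
    by metis
  define f where "f k mm = lm k (e k (\<lambda>i\<in>S k. \<iota> i (mm i)))" for k mm
  define g where "g j l sd = the_inv_into (msg_set n R j) (\<iota> j)
      (d j (\<lambda>k\<in>K. the_inv_into L (lm k) (l k)) (\<lambda>i\<in>A j. \<iota> i (sd i)))" for j l sd
  have main: "(\<forall>k\<in>K. f k (restrict m (S k)) \<in> link_set n (C k)) \<and> (\<forall>j. g j (sent K S f m) (restrict m (A j)) = m j)"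
    if m: "m \<in> msg_tuples n R" for m
  proof -
    define m' where "m' i = \<iota> i (m i)" for i
    have mi: "m i \<in> msg_set n R i" for i using m by (auto simp: msg_tuples_def PiE_iff)
    have m': "\<forall>j. m' j \<in> M j" using \<iota>1 mi by (auto simp: m'_def)
    from z m' have eL: "\<forall>k\<in>K. e k (restrict m' (S k)) \<in> L"
      and dd: "\<forall>j. d j (\<lambda>k\<in>K. e k (restrict m' (S k))) (restrict m' (A j)) = m' j"
      unfolding zcode_def by blast+
    have rr: "(\<lambda>i\<in>T. \<iota> i (restrict m T i)) = restrict m' T" for T by (auto simp: m'_def)
    have fk: "f k (restrict m (S k)) = lm k (e k (restrict m' (S k)))" for k by (simp only: f_def rr)
    have "\<forall>k\<in>K. f k (restrict m (S k)) \<in> link_set n (C k)"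
      using fk eL lm1 by blast
    moreover have "g j (sent K S f m) (restrict m (A j)) = m j" for j
    proof -
      have eq: "(\<lambda>k\<in>K. the_inv_into L (lm k) (sent K S f m k)) = (\<lambda>k\<in>K. e k (restrict m' (S k)))"
        using eL lm2 by (auto simp: sent_def fk the_inv_into_f_f)
      have "g j (sent K S f m) (restrict m (A j)) = the_inv_into (msg_set n R j) (\<iota> j)
          (d j (\<lambda>k\<in>K. the_inv_into L (lm k) (sent K S f m k)) (restrict m' (A j)))"
        by (simp only: g_def rr)
      also have "\<dots> = the_inv_into (msg_set n R j) (\<iota> j) (m' j)"
        unfolding eq using dd by simp
      also have "\<dots> = m j" using \<iota>2 mi by (simp add: m'_def the_inv_into_f_f)
      finally show ?thesis .
    qed
    ultimately show ?thesis by blast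
  qed
  have "valid_encoders n R K S C f" using main by (simp add: valid_encoders_def)
  moreover have E: "{m \<in> msg_tuples n R. \<exists>j. g j (sent K S f m) (restrict m (A j)) \<noteq> m j} = {}"
    using main by blast
  have "error_prob n R K S A f g = 0"
    unfolding error_prob_def E by simp
  ultimately show ?thesis by blast
qed

lemma achievable_eventually:
  fixes R :: "real^'n" and K :: "'k set"
  assumes R: "\<forall>j. 0 \<le> R $ j"
    and ev: "\<And>n. n \<ge> N \<Longrightarrow> \<exists>f g. valid_encoders n R K S C f \<and> error_prob n R K S A f g = 0"
  shows "achievable K S C A R"
proof -
  have "\<forall>n. \<exists>fg. valid_encoders n R K S C (fst fg) \<and> (n \<ge> N \<longrightarrow> error_prob n R K S A (fst fg) (snd fg) = 0)"
  proof
    fix n show "\<exists>fg. valid_encoders n R K S C (fst fg) \<and> (n \<ge> N \<longrightarrow> error_prob n R K S A (fst fg) (snd fg) = 0)"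
    proof (cases "n \<ge> N")
      case True then obtain f g where "valid_encoders n R K S C f \<and> error_prob n R K S A f g = 0"
        using ev by blast
      then show ?thesis by (intro exI[of _ "(f,g)"]) simp
    next
      case False
      have "valid_encoders n R K S C (\<lambda>k m. 1)" by (simp add: valid_encoders_def link_set_def)
      then show ?thesis using False by (intro exI[of _ "(\<lambda>k m. 1, undefined)"]) simp
    qed
  qed
  then obtain FG where FG: "\<And>n. valid_encoders n R K S C (fst (FG n)) \<and> (n \<ge> N \<longrightarrow> error_prob n R K S A (fst (FG n)) (snd (FG n)) = 0)"
    by metis
  have "(\<lambda>n. error_prob n R K S A (fst (FG n)) (snd (FG n))) \<longlonglongrightarrow> 0"
    by (rule tendsto_eventually) (use FG in \<open>auto simp: eventually_sequentially\<close>)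
  then show ?thesis unfolding achievable_def using R FG
    by (intro conjI exI[of _ "\<lambda>n. fst (FG n)"] exI[of _ "\<lambda>n. snd (FG n)"]) auto
qed




definition PV :: "(4 \<Rightarrow> nat) \<Rightarrow> nat \<Rightarrow> 4 \<Rightarrow> (nat \<Rightarrow> int) set" where
  "PV w t j = PiE {..<w j} (\<lambda>_. {0..<2^t})"

lemma card_PV: "card (PV w t j) = 2 ^ (t * w j)"
  by (simp add: PV_def card_PiE power_mult nat_power_eq)

lemma finite_PV: "finite (PV w t j)"
  by (simp add: PV_def finite_PiE)

lemma card_LV: "card {0..<(2::int)^t} = 2 ^ t"
  by (simp add: nat_power_eq)

lemma big_code:
  "\<exists>e d. zcode Kinst id Ainst
     (\<lambda>j. ((((PV wV1 t1 j \<times> PV wV2 t2 j) \<times> PV wV3 t3 j) \<times> PV wV4 t4 j) \<times> PV wV5 t5 j) \<times> PV wV6 t6 j)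
     ((((({0..<(2::int)^t1} \<times> {0..<(2::int)^t2}) \<times> {0..<(2::int)^t3}) \<times> {0..<(2::int)^t4}) \<times> {0..<(2::int)^t5}) \<times> {0..<(2::int)^t6})
     e d"
proof -
  have p: "(0::int) < 2 ^ t" for t by simp
  show ?thesis unfolding PV_def
    using zcode_prod[OF zcode_prod[OF zcode_prod[OF zcode_prod[OF zcode_prod[OF
       zcodeV1[OF p[of t1]] zcodeV2[OF p[of t2]]] zcodeV3[OF p[of t3]]] zcodeV4[OF p[of t4]]] zcodeV5[OF p[of t5]]] zcodeV6[OF p[of t6]]]
    by blast
qed

lemma nat_ceil_le_aux:
  fixes x :: real and m :: nat
  assumes "x + 1 \<le> real m"
  shows "nat \<lceil>x\<rceil> \<le> m"
  using assms by linarith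

lemma floor_lower: "0 \<le> x \<Longrightarrow> x - 1 \<le> real (nat \<lfloor>x\<rfloor>)"
  by linarith

lemma floor_upper: "0 \<le> x \<Longrightarrow> real (nat \<lfloor>x\<rfloor>) \<le> x"
  by linarith

lemma ach_lambda:
  fixes R :: "real^4" and a b c d e f :: real
  assumes pos: "0 \<le> a" "0 \<le> b" "0 \<le> c" "0 \<le> d" "0 \<le> e" "0 \<le> f" and sum1: "a + b + c + d + e + f \<le> 1"
    and R0: "\<forall>j. 0 \<le> R $ j"
    and Rlt: "\<forall>j. R $ j = 0 \<or> R $ j < a * wV1 j + b * wV2 j + c * wV3 j + d * wV4 j + e * wV5 j + f * wV6 j"
  shows "achievable Kinst id (\<lambda>_. 1) Ainst R"
proof -
  define lw where "lw j = a * wV1 j + b * wV2 j + c * wV3 j + d * wV4 j + e * wV5 j + f * wV6 j" for j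
  define N where "N = (\<Sum>j\<in>UNIV. if R $ j = 0 then 0 else nat \<lceil>49 / (lw j - R $ j)\<rceil>)"
  have wle: "wV1 j \<le> 8 \<and> wV2 j \<le> 8 \<and> wV3 j \<le> 8 \<and> wV4 j \<le> 8 \<and> wV5 j \<le> 8 \<and> wV6 j \<le> 8" for j
    by (simp add: wV1_def wV2_def wV3_def wV4_def wV5_def wV6_def)
  show ?thesis
  proof (rule achievable_eventually[OF R0])
    fix n assume nN: "N \<le> n"
    define t1 where "t1 = nat \<lfloor>a * n\<rfloor>"
    define t2 where "t2 = nat \<lfloor>b * n\<rfloor>"
    define t3 where "t3 = nat \<lfloor>c * n\<rfloor>"
    define t4 where "t4 = nat \<lfloor>d * n\<rfloor>"
    define t5 where "t5 = nat \<lfloor>e * n\<rfloor>"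
    define t6 where "t6 = nat \<lfloor>f * n\<rfloor>"
    have n0: "0 \<le> real n" by simp
    have lo: "a * n - 1 \<le> real t1" "b * n - 1 \<le> real t2" "c * n - 1 \<le> real t3"
       "d * n - 1 \<le> real t4" "e * n - 1 \<le> real t5" "f * n - 1 \<le> real t6"
      unfolding t1_def t2_def t3_def t4_def t5_def t6_def
      by (rule floor_lower; use pos n0 in simp)+
    have hi: "real t1 \<le> a * n" "real t2 \<le> b * n" "real t3 \<le> c * n"
       "real t4 \<le> d * n" "real t5 \<le> e * n" "real t6 \<le> f * n"
      unfolding t1_def t2_def t3_def t4_def t5_def t6_def
      by (rule floor_upper; use pos n0 in simp)+
    obtain enc dec where z: "zcode Kinst id Ainst
     (\<lambda>j. ((((PV wV1 t1 j \<times> PV wV2 t2 j) \<times> PV wV3 t3 j) \<times> PV wV4 t4 j) \<times> PV wV5 t5 j) \<times> PV wV6 t6 j)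
     ((((({0..<(2::int)^t1} \<times> {0..<(2::int)^t2}) \<times> {0..<(2::int)^t3}) \<times> {0..<(2::int)^t4}) \<times> {0..<(2::int)^t5}) \<times> {0..<(2::int)^t6})
     enc dec" using big_code by blast
    show "\<exists>f g. valid_encoders n R Kinst id (\<lambda>_. 1) f \<and> error_prob n R Kinst id Ainst f g = 0"
    proof (rule zcode_transfer[OF z])
      fix j
      have cardM: "card (((((PV wV1 t1 j \<times> PV wV2 t2 j) \<times> PV wV3 t3 j) \<times> PV wV4 t4 j) \<times> PV wV5 t5 j) \<times> PV wV6 t6 j)
         = 2 ^ (t1 * wV1 j + t2 * wV2 j + t3 * wV3 j + t4 * wV4 j + t5 * wV5 j + t6 * wV6 j)"
        by (simp add: card_cartesian_product card_PV power_add)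
      have "nat \<lceil>real n * R $ j\<rceil> \<le> t1 * wV1 j + t2 * wV2 j + t3 * wV3 j + t4 * wV4 j + t5 * wV5 j + t6 * wV6 j"
      proof (cases "R $ j = 0")
        case True then show ?thesis by simp
      next
        case False
        then have D: "0 < lw j - R $ j" using Rlt by (auto simp: lw_def)
        have "(\<lambda>j. if R $ j = 0 then 0 else nat \<lceil>49 / (lw j - R $ j)\<rceil>) j \<le> N"
          unfolding N_def by (rule member_le_sum) auto
        then have "nat \<lceil>49 / (lw j - R $ j)\<rceil> \<le> N" using False by simp
        then have "49 / (lw j - R $ j) \<le> real n" using nN by linarith
        then have nD: "49 \<le> real n * (lw j - R $ j)" using D by (simp add: field_simps)
        have ws: "real (t1 * wV1 j + t2 * wV2 j + t3 * wV3 j + t4 * wV4 j + t5 * wV5 j + t6 * wV6 j)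
            \<ge> real n * lw j - 48"
        proof -
          have "real (t1 * wV1 j) \<ge> (a * n - 1) * wV1 j" using lo(1) by (simp add: mult_right_mono)
          moreover have "real (t2 * wV2 j) \<ge> (b * n - 1) * wV2 j" using lo(2) by (simp add: mult_right_mono)
          moreover have "real (t3 * wV3 j) \<ge> (c * n - 1) * wV3 j" using lo(3) by (simp add: mult_right_mono)
          moreover have "real (t4 * wV4 j) \<ge> (d * n - 1) * wV4 j" using lo(4) by (simp add: mult_right_mono)
          moreover have "real (t5 * wV5 j) \<ge> (e * n - 1) * wV5 j" using lo(5) by (simp add: mult_right_mono)
          moreover have "real (t6 * wV6 j) \<ge> (f * n - 1) * wV6 j" using lo(6) by (simp add: mult_right_mono)
          moreover have "real (wV1 j) \<le> 8" "real (wV2 j) \<le> 8" "real (wV3 j) \<le> 8" "real (wV4 j) \<le> 8" "real (wV5 j) \<le> 8" "real (wV6 j) \<le> 8"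
            using wle[of j] by auto
          ultimately show ?thesis unfolding lw_def by (simp add: algebra_simps)
        qed
        show ?thesis
          by (rule nat_ceil_le_aux) (use ws nD in \<open>simp add: algebra_simps\<close>)
      qed
      then show "2 ^ nat \<lceil>real n * R $ j\<rceil> \<le> card (((((PV wV1 t1 j \<times> PV wV2 t2 j) \<times> PV wV3 t3 j) \<times> PV wV4 t4 j) \<times> PV wV5 t5 j) \<times> PV wV6 t6 j)"
        unfolding cardM by (rule power_increasing) simp
    next
      fix k :: "4 set"
      have "real (t1 + t2 + t3 + t4 + t5 + t6) \<le> real n"
      proof -
        have "real (t1 + t2 + t3 + t4 + t5 + t6) \<le> (a + b + c + d + e + f) * n"
          using hi by (simp add: algebra_simps)
        also have "\<dots> \<le> 1 * real n" using sum1 by (intro mult_right_mono) auto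
        finally show ?thesis by simp
      qed
      then have "t1 + t2 + t3 + t4 + t5 + t6 \<le> nat \<lfloor>real n * 1\<rfloor>" by simp
      then show "card (((((({0..<(2::int)^t1} \<times> {0..<(2::int)^t2}) \<times> {0..<(2::int)^t3}) \<times> {0..<(2::int)^t4}) \<times> {0..<(2::int)^t5}) \<times> {0..<(2::int)^t6}))
          \<le> 2 ^ nat \<lfloor>real n * 1\<rfloor>"
        by (simp add: card_cartesian_product nat_power_eq power_add[symmetric] power_increasing)
    qed (simp_all add: finite_PV)
  qed
qed




definition Preg :: "(real^4) set" where
  "Preg = {R :: real^4. (\<forall>j. 0 \<le> R $ j) \<and> (\<forall>j. R $ j \<le> 8) \<and>
              R $ 1 + R $ 2 \<le> 12 \<and> R $ 1 + R $ 3 \<le> 12 \<and> R $ 1 + R $ 4 \<le> 12 \<and>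
              R $ 3 + R $ 4 \<le> 12 \<and> R $ 1 + R $ 2 + R $ 3 \<le> 18}"

lemma ach_scaled:
  assumes R: "R \<in> Preg" and c: "0 \<le> c" "c < 1"
  shows "achievable Kinst id (\<lambda>_. 1) Ainst (c *\<^sub>R R)"
proof -
  have R0: "\<forall>j. 0 \<le> R $ j" and R8: "\<forall>j. R $ j \<le> 8"
    and H: "R $ 1 + R $ 2 \<le> 12" "R $ 1 + R $ 3 \<le> 12" "R $ 1 + R $ 4 \<le> 12"
              "R $ 3 + R $ 4 \<le> 12" "R $ 1 + R $ 2 + R $ 3 \<le> 18"
    using R by (auto simp: Preg_def)
  obtain a b cc d e f :: real where g: "0 \<le> a" "0 \<le> b" "0 \<le> cc" "0 \<le> d" "0 \<le> e" "0 \<le> f"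
     "a + b + cc + d + e + f \<le> 1"
     "R $ 1 \<le> 2*a + 4*b + 4*cc + 4*d + 6*e + 8*f" "R $ 2 \<le> 8*a + 6*b + 8*cc + 8*d + 6*e + 4*f"
     "R $ 3 \<le> 8*a + 8*b + 4*cc + 6*d + 6*e + 4*f" "R $ 4 \<le> 4*a + 4*b + 8*cc + 6*d + 6*e + 4*f"
    using geo_decomp[of "R $ 1" "R $ 2" "R $ 3" "R $ 4"] R0 R8 H by blast
  have lw: "R $ j \<le> a * wV1 j + b * wV2 j + cc * wV3 j + d * wV4 j + e * wV5 j + f * wV6 j" for j
    using exhaust4[of j] g(8-11)
    by (auto simp: wV1_def wV2_def wV3_def wV4_def wV5_def wV6_def algebra_simps)
  show ?thesis
  proof (rule ach_lambda[OF g(1-7)])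
    show "\<forall>j. 0 \<le> (c *\<^sub>R R) $ j" using R0 c by simp
    show "\<forall>j. (c *\<^sub>R R) $ j = 0 \<or> (c *\<^sub>R R) $ j < a * wV1 j + b * wV2 j + cc * wV3 j + d * wV4 j + e * wV5 j + f * wV6 j"
    proof
      fix j
      show "(c *\<^sub>R R) $ j = 0 \<or> (c *\<^sub>R R) $ j < a * wV1 j + b * wV2 j + cc * wV3 j + d * wV4 j + e * wV5 j + f * wV6 j"
      proof (cases "R $ j = 0")
        case True then show ?thesis by simp
      next
        case False
        then have "0 < R $ j" using R0 by (metis order_le_less)
        then have "c * R $ j < R $ j" using c by simp
        then show ?thesis using lw[of j] by simp
      qed
    qed
  qed
qed

lemma Preg_sub_closure: "Preg \<subseteq> closure {R. achievable Kinst id (\<lambda>_. 1) Ainst R}"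
proof
  fix R assume R: "R \<in> Preg"
  define x where "x n = (1 + - inverse (real (Suc n))) *\<^sub>R R" for n
  have "\<forall>n. x n \<in> {R. achievable Kinst id (\<lambda>_. 1) Ainst R}"
  proof
    fix n
    have "0 \<le> 1 + - inverse (real (Suc n))" by (simp add: field_simps)
    moreover have "1 + - inverse (real (Suc n)) < 1" by simp
    ultimately show "x n \<in> {R. achievable Kinst id (\<lambda>_. 1) Ainst R}"
      using ach_scaled[OF R] by (simp add: x_def)
  qed
  moreover have "x \<longlonglongrightarrow> R"
    unfolding x_def
    using tendsto_scaleR[OF LIMSEQ_inverse_real_of_nat_add_minus[of 1] tendsto_const[of R]] by simp
  ultimately show "R \<in> closure {R. achievable Kinst id (\<lambda>_. 1) Ainst R}"
    unfolding closure_sequential by blast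
qed

lemma closed_Preg: "closed Preg"
  unfolding Preg_def
  by (intro closed_Collect_conj closed_Collect_all closed_Collect_le continuous_intros)




definition cnt :: "'a set \<Rightarrow> ('a \<Rightarrow> 'b) \<Rightarrow> 'a \<Rightarrow> nat" where
  "cnt \<Omega> X w = card {v\<in>\<Omega>. X v = X w}"

definition ent :: "'a set \<Rightarrow> ('a \<Rightarrow> 'b) \<Rightarrow> real" where
  "ent \<Omega> X = (\<Sum>w\<in>\<Omega>. ln (real (card \<Omega>) / real (cnt \<Omega> X w))) / real (card \<Omega>)"

lemma cnt_pos: "finite \<Omega> \<Longrightarrow> w \<in> \<Omega> \<Longrightarrow> 0 < cnt \<Omega> X w"
  unfolding cnt_def by (subst card_gt_0_iff) auto

lemma cnt_le: "finite \<Omega> \<Longrightarrow> cnt \<Omega> X w \<le> card \<Omega>"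
  unfolding cnt_def by (rule card_mono) auto

lemma ent_cong:
  assumes "\<And>v w. v \<in> \<Omega> \<Longrightarrow> w \<in> \<Omega> \<Longrightarrow> X v = X w \<longleftrightarrow> Y v = Y w"
  shows "ent \<Omega> X = ent \<Omega> Y"
proof -
  have "cnt \<Omega> X w = cnt \<Omega> Y w" if "w \<in> \<Omega>" for w
  proof -
    have "{v\<in>\<Omega>. X v = X w} = {v\<in>\<Omega>. Y v = Y w}" using assms that by blast
    then show ?thesis by (simp add: cnt_def)
  qed
  then show ?thesis unfolding ent_def by (intro arg_cong2[where f="(/)"] sum.cong) simp_all
qed

lemma ent_mono:
  assumes fin: "finite \<Omega>" and det: "\<And>v w. v \<in> \<Omega> \<Longrightarrow> w \<in> \<Omega> \<Longrightarrow> Y v = Y w \<Longrightarrow> X v = X w"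
  shows "ent \<Omega> X \<le> ent \<Omega> Y"
proof -
  have le: "cnt \<Omega> Y w \<le> cnt \<Omega> X w" if "w \<in> \<Omega>" for w
  proof -
    have "{v\<in>\<Omega>. Y v = Y w} \<subseteq> {v\<in>\<Omega>. X v = X w}" using det that by blast
    then show ?thesis unfolding cnt_def using fin by (intro card_mono) auto
  qed
  have "ln (real (card \<Omega>) / real (cnt \<Omega> X w)) \<le> ln (real (card \<Omega>) / real (cnt \<Omega> Y w))" if w: "w \<in> \<Omega>" for w
  proof -
    have p: "0 < real (cnt \<Omega> Y w)" "0 < real (card \<Omega>)"
      using cnt_pos[OF fin w] w fin by (auto simp: card_gt_0_iff)
    have "real (card \<Omega>) / real (cnt \<Omega> X w) \<le> real (card \<Omega>) / real (cnt \<Omega> Y w)"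
      using le[OF w] p by (intro divide_left_mono) auto
    moreover have "0 < real (cnt \<Omega> X w)" using cnt_pos[OF fin w] by simp
    then have "0 < real (card \<Omega>) / real (cnt \<Omega> X w)" using p by simp
    ultimately show ?thesis by simp
  qed
  then show ?thesis unfolding ent_def by (intro divide_right_mono sum_mono) auto
qed

lemma ent_nonneg:
  assumes fin: "finite \<Omega>"
  shows "0 \<le> ent \<Omega> X"
proof -
  have "0 \<le> ln (real (card \<Omega>) / real (cnt \<Omega> X w))" if w: "w \<in> \<Omega>" for w
  proof (rule ln_ge_zero)
    have "0 < real (cnt \<Omega> X w)" using cnt_pos[OF fin w] by simp
    moreover have "real (cnt \<Omega> X w) \<le> real (card \<Omega>)" using cnt_le[OF fin, of X w] by simp
    ultimately show "1 \<le> real (card \<Omega>) / real (cnt \<Omega> X w)" by simp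
  qed
  then show ?thesis unfolding ent_def by (intro divide_nonneg_nonneg sum_nonneg) auto
qed

lemma ent_inj:
  assumes fin: "finite \<Omega>" and inj: "inj_on X \<Omega>"
  shows "ent \<Omega> X = ln (real (card \<Omega>))"
proof (cases "\<Omega> = {}")
  case True then show ?thesis by (simp add: ent_def)
next
  case False
  have "cnt \<Omega> X w = 1" if "w \<in> \<Omega>" for w
  proof -
    have "{v\<in>\<Omega>. X v = X w} = {w}" using inj that by (auto simp: inj_on_def)
    then show ?thesis by (simp add: cnt_def)
  qed
  then have "ent \<Omega> X = (\<Sum>w\<in>\<Omega>. ln (real (card \<Omega>))) / real (card \<Omega>)"
    unfolding ent_def by (intro arg_cong2[where f="(/)"] sum.cong) auto
  also have "\<dots> = ln (real (card \<Omega>))" using False fin by simp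
  finally show ?thesis .
qed

lemma sum_inv_cnt:
  assumes fin: "finite \<Omega>"
  shows "(\<Sum>w\<in>\<Omega>. 1 / real (cnt \<Omega> X w)) = real (card (X ` \<Omega>))"
proof -
  have "(\<Sum>w\<in>\<Omega>. 1 / real (cnt \<Omega> X w)) = (\<Sum>y\<in>X ` \<Omega>. \<Sum>w\<in>{w. w \<in> \<Omega> \<and> X w = y}. 1 / real (cnt \<Omega> X w))"
    by (rule sum.image_gen[OF fin])
  also have "\<dots> = (\<Sum>y\<in>X ` \<Omega>. 1)"
  proof (rule sum.cong[OF refl])
    fix y assume y: "y \<in> X ` \<Omega>"
    define F where "F = {w. w \<in> \<Omega> \<and> X w = y}"
    have cF: "cnt \<Omega> X w = card F" if "w \<in> F" for w
      using that unfolding cnt_def F_def by (intro arg_cong[where f=card]) auto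
    have "F \<noteq> {}" using y by (auto simp: F_def)
    moreover have "finite F" using fin by (simp add: F_def)
    ultimately have "card F > 0" by (simp add: card_gt_0_iff)
    have "(\<Sum>w\<in>F. 1 / real (cnt \<Omega> X w)) = (\<Sum>w\<in>F. 1 / real (card F))"
      using cF by (intro sum.cong) auto
    also have "\<dots> = 1" using \<open>card F > 0\<close> by simp
    finally show "(\<Sum>w\<in>{w. w \<in> \<Omega> \<and> X w = y}. 1 / real (cnt \<Omega> X w)) = 1" by (simp add: F_def)
  qed
  also have "\<dots> = real (card (X ` \<Omega>))" by simp
  finally show ?thesis .
qed

lemma ent_card:
  assumes fin: "finite \<Omega>" and ne: "\<Omega> \<noteq> {}"
  shows "ent \<Omega> X \<le> ln (real (card (X ` \<Omega>)))"
proof -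
  define N where "N = real (card \<Omega>)"
  define K where "K = real (card (X ` \<Omega>))"
  have N: "0 < N" using fin ne by (simp add: N_def card_gt_0_iff)
  have K: "0 < K" using fin ne by (simp add: K_def card_gt_0_iff)
  have cp: "0 < real (cnt \<Omega> X w)" if "w \<in> \<Omega>" for w using cnt_pos[OF fin that] by simp
  have "ent \<Omega> X - ln K = (\<Sum>w\<in>\<Omega>. ln (N / (K * real (cnt \<Omega> X w)))) / N"
  proof -
    have "ln (N / (K * real (cnt \<Omega> X w))) = ln (N / real (cnt \<Omega> X w)) - ln K" if "w \<in> \<Omega>" for w
      using cp[OF that] N K by (simp add: ln_div ln_mult)
    then have "(\<Sum>w\<in>\<Omega>. ln (N / (K * real (cnt \<Omega> X w)))) = (\<Sum>w\<in>\<Omega>. ln (N / real (cnt \<Omega> X w))) - N * ln K"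
      by (simp add: sum_subtractf N_def)
    then show ?thesis using N unfolding ent_def N_def[symmetric] by (simp add: field_simps)
  qed
  also have "\<dots> \<le> (\<Sum>w\<in>\<Omega>. N / (K * real (cnt \<Omega> X w)) - 1) / N"
    using N K cp by (intro divide_right_mono sum_mono ln_le_minus_one) auto
  also have "\<dots> = ((N / K) * (\<Sum>w\<in>\<Omega>. 1 / real (cnt \<Omega> X w)) - N) / N"
    by (simp add: sum_subtractf sum_distrib_left N_def)
  also have "\<dots> = 0" using sum_inv_cnt[OF fin, of X] N K by (simp add: K_def)
  finally show ?thesis by (simp add: K_def)
qed

lemma card_filter_sum:
  assumes "finite A"
  shows "real (card {a\<in>A. P a}) = (\<Sum>a\<in>A. if P a then 1 else 0)"
proof -
  have "real (card {a\<in>A. P a}) = (\<Sum>a\<in>{a\<in>A. P a}. 1)" by simp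
  also have "\<dots> = (\<Sum>a\<in>A. if P a then 1 else 0)" using assms by (rule sum.inter_filter)
  finally show ?thesis .
qed

lemma submod_count:
  fixes X :: "'a \<Rightarrow> 'b" and Y :: "'a \<Rightarrow> 'c" and Z :: "'a \<Rightarrow> 'd"
  assumes fin: "finite \<Omega>"
  shows "(\<Sum>w\<in>\<Omega>. real (cnt \<Omega> (\<lambda>w. (X w, Z w)) w) * real (cnt \<Omega> (\<lambda>w. (Y w, Z w)) w)
            / (real (cnt \<Omega> (\<lambda>w. (X w, Y w, Z w)) w) * real (cnt \<Omega> Z w))) \<le> real (card \<Omega>)"
proof -
  define c1 where "c1 w = real (cnt \<Omega> (\<lambda>w. (X w, Y w, Z w)) w)" for w
  define c2 where "c2 w = real (cnt \<Omega> Z w)" for w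
  define P where "P a b w = (X a = X w \<and> Z a = Z w \<and> Y b = Y w \<and> Z b = Z w)" for a b w
  have c2pos: "0 < c2 w" if "w \<in> \<Omega>" for w using cnt_pos[OF fin that] by (simp add: c2_def)
  have eq1: "real (cnt \<Omega> (\<lambda>w. (X w, Z w)) w) * real (cnt \<Omega> (\<lambda>w. (Y w, Z w)) w)
      = (\<Sum>a\<in>\<Omega>. \<Sum>b\<in>\<Omega>. if P a b w then 1 else 0)" for w
  proof -
    have "real (cnt \<Omega> (\<lambda>w. (X w, Z w)) w) = (\<Sum>a\<in>\<Omega>. if X a = X w \<and> Z a = Z w then 1 else 0)"
      unfolding cnt_def using card_filter_sum[OF fin] by simp
    moreover have "real (cnt \<Omega> (\<lambda>w. (Y w, Z w)) w) = (\<Sum>b\<in>\<Omega>. if Y b = Y w \<and> Z b = Z w then 1 else 0)"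
      unfolding cnt_def using card_filter_sum[OF fin] by simp
    ultimately show ?thesis
      by (simp add: sum_product P_def if_distrib[where f="\<lambda>x. x * _"] conj_assoc cong: if_cong)
         (intro sum.cong refl, auto)
  qed
  have T: "(\<Sum>w\<in>\<Omega>. if P a b w then 1 / (c1 w * c2 w) else 0) \<le> (if Z a = Z b then 1 / c2 a else 0)"
    if a: "a \<in> \<Omega>" and b: "b \<in> \<Omega>" for a b
  proof (cases "Z a = Z b")
    case False
    then have "\<And>w. \<not> P a b w" by (auto simp: P_def)
    then show ?thesis using False by simp
  next
    case True
    define F where "F = {w\<in>\<Omega>. P a b w}"
    have finF: "finite F" using fin by (simp add: F_def)
    have c1F: "c1 w = real (card F)" if "w \<in> F" for w
    proof -
      have "{v\<in>\<Omega>. (X v, Y v, Z v) = (X w, Y w, Z w)} = F"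
        using that True by (auto simp: F_def P_def)
      then show ?thesis by (simp add: c1_def cnt_def)
    qed
    have c2F: "c2 w = c2 a" if "w \<in> F" for w
    proof -
      have "{v\<in>\<Omega>. Z v = Z w} = {v\<in>\<Omega>. Z v = Z a}" using that by (auto simp: F_def P_def)
      then show ?thesis by (simp add: c2_def cnt_def)
    qed
    have "(\<Sum>w\<in>\<Omega>. if P a b w then 1 / (c1 w * c2 w) else 0) = (\<Sum>w\<in>F. 1 / (c1 w * c2 w))"
      unfolding F_def using fin by (simp add: sum.inter_filter)
    also have "\<dots> = (\<Sum>w\<in>F. 1 / (real (card F) * c2 a))"
      using c1F c2F by (intro sum.cong) auto
    also have "\<dots> = real (card F) / (real (card F) * c2 a)" by simp
    also have "\<dots> \<le> 1 / c2 a"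
      using c2pos[OF a] by (cases "card F = 0") (auto simp: field_simps)
    finally show ?thesis using True by simp
  qed
  have "(\<Sum>w\<in>\<Omega>. real (cnt \<Omega> (\<lambda>w. (X w, Z w)) w) * real (cnt \<Omega> (\<lambda>w. (Y w, Z w)) w)
            / (real (cnt \<Omega> (\<lambda>w. (X w, Y w, Z w)) w) * real (cnt \<Omega> Z w)))
      = (\<Sum>w\<in>\<Omega>. \<Sum>a\<in>\<Omega>. \<Sum>b\<in>\<Omega>. if P a b w then 1 / (c1 w * c2 w) else 0)"
    unfolding eq1 c1_def[symmetric] c2_def[symmetric]
    by (simp add: sum_divide_distrib if_distrib[where f="\<lambda>x. x / _"] cong: if_cong)
  also have "\<dots> = (\<Sum>a\<in>\<Omega>. \<Sum>b\<in>\<Omega>. \<Sum>w\<in>\<Omega>. if P a b w then 1 / (c1 w * c2 w) else 0)"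
    by (subst sum.swap) (subst (2) sum.swap, rule refl)
  also have "\<dots> \<le> (\<Sum>a\<in>\<Omega>. \<Sum>b\<in>\<Omega>. if Z a = Z b then 1 / c2 a else 0)"
    using T by (intro sum_mono) auto
  also have "\<dots> = (\<Sum>a\<in>\<Omega>. c2 a * (1 / c2 a))"
  proof (intro sum.cong refl)
    fix a assume a: "a \<in> \<Omega>"
    have "(\<Sum>b\<in>\<Omega>. if Z a = Z b then 1 / c2 a else 0) = (\<Sum>b\<in>\<Omega>. (if Z b = Z a then 1 else 0) * (1 / c2 a))"
      by (intro sum.cong) auto
    also have "\<dots> = (\<Sum>b\<in>\<Omega>. if Z b = Z a then 1 else 0) * (1 / c2 a)"
      by (simp only: sum_distrib_right)
    also have "(\<Sum>b\<in>\<Omega>. if Z b = Z a then 1 else 0) = c2 a"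
      unfolding c2_def cnt_def using card_filter_sum[OF fin] by simp
    finally show "(\<Sum>b\<in>\<Omega>. if Z a = Z b then 1 / c2 a else 0) = c2 a * (1 / c2 a)" .
  qed
  also have "\<dots> = (\<Sum>a\<in>\<Omega>. 1)" using c2pos by (intro sum.cong) (auto, fastforce)
  also have "\<dots> = real (card \<Omega>)" by simp
  finally show ?thesis .
qed

lemma ent_submod:
  fixes X :: "'a \<Rightarrow> 'b" and Y :: "'a \<Rightarrow> 'c" and Z :: "'a \<Rightarrow> 'd"
  assumes fin: "finite \<Omega>"
  shows "ent \<Omega> (\<lambda>w. (X w, Y w, Z w)) + ent \<Omega> Z \<le> ent \<Omega> (\<lambda>w. (X w, Z w)) + ent \<Omega> (\<lambda>w. (Y w, Z w))"
proof (cases "\<Omega> = {}")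
  case True then show ?thesis by (simp add: ent_def)
next
  case False
  define N where "N = real (card \<Omega>)"
  have N: "0 < N" using fin False by (simp add: N_def card_gt_0_iff)
  define c1 where "c1 w = real (cnt \<Omega> (\<lambda>w. (X w, Y w, Z w)) w)" for w
  define c2 where "c2 w = real (cnt \<Omega> Z w)" for w
  define c3 where "c3 w = real (cnt \<Omega> (\<lambda>w. (X w, Z w)) w)" for w
  define c4 where "c4 w = real (cnt \<Omega> (\<lambda>w. (Y w, Z w)) w)" for w
  have pos: "0 < c1 w" "0 < c2 w" "0 < c3 w" "0 < c4 w" if "w \<in> \<Omega>" for w
    using cnt_pos[OF fin that] by (simp_all add: c1_def c2_def c3_def c4_def)
  have "ent \<Omega> (\<lambda>w. (X w, Y w, Z w)) + ent \<Omega> Z - ent \<Omega> (\<lambda>w. (X w, Z w)) - ent \<Omega> (\<lambda>w. (Y w, Z w))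
      = (\<Sum>w\<in>\<Omega>. ln (N / c1 w) + ln (N / c2 w) - ln (N / c3 w) - ln (N / c4 w)) / N"
    unfolding ent_def c1_def c2_def c3_def c4_def N_def
    by (simp add: sum.distrib sum_subtractf add_divide_distrib diff_divide_distrib)
  also have "\<dots> = (\<Sum>w\<in>\<Omega>. ln ((c3 w * c4 w) / (c1 w * c2 w))) / N"
  proof -
    have "ln (N / c1 w) + ln (N / c2 w) - ln (N / c3 w) - ln (N / c4 w) = ln ((c3 w * c4 w) / (c1 w * c2 w))"
      if "w \<in> \<Omega>" for w
      using pos[OF that] N by (simp add: ln_div ln_mult)
    then show ?thesis by (intro arg_cong2[where f="(/)"] sum.cong) auto
  qed
  also have "\<dots> \<le> (\<Sum>w\<in>\<Omega>. (c3 w * c4 w) / (c1 w * c2 w) - 1) / N"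
    using N pos by (intro divide_right_mono sum_mono ln_le_minus_one) auto
  also have "\<dots> = ((\<Sum>w\<in>\<Omega>. (c3 w * c4 w) / (c1 w * c2 w)) - N) / N"
    by (simp add: sum_subtractf N_def)
  also have "\<dots> \<le> 0"
    using submod_count[OF fin, of X Z Y] N
    unfolding c1_def c2_def c3_def c4_def N_def by (simp add: divide_nonpos_pos)
  finally show ?thesis by simp
qed




definition HH :: "'a set \<Rightarrow> ('a \<Rightarrow> 'e \<Rightarrow> 'v) \<Rightarrow> 'e set \<Rightarrow> real" where
  "HH \<Omega> wv U = ent \<Omega> (\<lambda>m. restrict (wv m) U)"

lemma restrict_eq_iff: "restrict f U = restrict g U \<longleftrightarrow> (\<forall>x\<in>U. f x = g x)"
  by (auto simp: restrict_def fun_eq_iff)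

lemma HH_mono:
  assumes "finite \<Omega>" "U \<subseteq> V"
  shows "HH \<Omega> wv U \<le> HH \<Omega> wv V"
  unfolding HH_def using assms by (intro ent_mono) (auto simp: restrict_eq_iff)

lemma HH_nonneg: "finite \<Omega> \<Longrightarrow> 0 \<le> HH \<Omega> wv U"
  unfolding HH_def by (rule ent_nonneg)

lemma HH_submod:
  assumes fin: "finite \<Omega>"
  shows "HH \<Omega> wv (U \<union> V) + HH \<Omega> wv (U \<inter> V) \<le> HH \<Omega> wv U + HH \<Omega> wv V"
proof -
  let ?X = "\<lambda>m. restrict (wv m) U" and ?Y = "\<lambda>m. restrict (wv m) V" and ?Z = "\<lambda>m. restrict (wv m) (U \<inter> V)"
  have e1: "ent \<Omega> (\<lambda>m. (?X m, ?Y m, ?Z m)) = HH \<Omega> wv (U \<union> V)"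
    unfolding HH_def by (rule ent_cong) (auto simp: restrict_eq_iff)
  have e2: "ent \<Omega> (\<lambda>m. (?X m, ?Z m)) = HH \<Omega> wv U"
    unfolding HH_def by (rule ent_cong) (auto simp: restrict_eq_iff)
  have e3: "ent \<Omega> (\<lambda>m. (?Y m, ?Z m)) = HH \<Omega> wv V"
    unfolding HH_def by (rule ent_cong) (auto simp: restrict_eq_iff)
  show ?thesis using ent_submod[OF fin, of ?X ?Y ?Z] e1 e2 e3 by (simp add: HH_def)
qed

lemma HH_subadd:
  assumes fin: "finite \<Omega>"
  shows "HH \<Omega> wv (U \<union> V) \<le> HH \<Omega> wv U + HH \<Omega> wv V"
  using HH_submod[OF fin, of wv U V] HH_nonneg[OF fin, of wv "U \<inter> V"] by linarith

lemma HH_det: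
  assumes det: "\<And>m m'. m \<in> \<Omega> \<Longrightarrow> m' \<in> \<Omega> \<Longrightarrow> (\<forall>x\<in>U. wv m x = wv m' x) \<Longrightarrow> (\<forall>x\<in>V. wv m x = wv m' x)"
  shows "HH \<Omega> wv (U \<union> V) = HH \<Omega> wv U"
  unfolding HH_def
proof (rule ent_cong)
  fix v w assume "v \<in> \<Omega>" "w \<in> \<Omega>"
  then show "(restrict (wv v) (U \<union> V) = restrict (wv w) (U \<union> V)) = (restrict (wv v) U = restrict (wv w) U)"
    using det[of v w] by (auto simp: restrict_eq_iff)
qed

lemma HH_card:
  assumes "finite \<Omega>" "\<Omega> \<noteq> {}"
  shows "HH \<Omega> wv U \<le> ln (real (card ((\<lambda>m. restrict (wv m) U) ` \<Omega>)))"
  unfolding HH_def using assms by (rule ent_card)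

lemma HH_UN:
  assumes fin: "finite \<Omega>" and T: "finite T"
    and b: "\<And>t. t \<in> T \<Longrightarrow> HH \<Omega> wv (F t) \<le> c t"
  shows "HH \<Omega> wv (\<Union>t\<in>T. F t) \<le> (\<Sum>t\<in>T. c t)"
  using T b
proof (induction T rule: finite_induct)
  case empty
  have "HH \<Omega> wv {} \<le> HH \<Omega> wv {} + HH \<Omega> wv {}" using HH_subadd[OF fin, of wv "{}" "{}"] by simp
  moreover have "HH \<Omega> wv {} \<ge> 0" by (rule HH_nonneg[OF fin])
  moreover have "HH \<Omega> wv {} \<le> 0"
  proof -
    have a: "HH \<Omega> wv {} \<le> ent \<Omega> (\<lambda>m. ())" unfolding HH_def by (rule ent_mono[OF fin]) (simp add: restrict_eq_iff)
    have "ent \<Omega> (\<lambda>m. ()) = 0"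
    proof (cases "\<Omega> = {}")
      case True then show ?thesis by (simp add: ent_def)
    next
      case False
      have "cnt \<Omega> (\<lambda>m. ()) w = card \<Omega>" for w by (simp add: cnt_def)
      then show ?thesis using False fin by (simp add: ent_def)
    qed
    with a show ?thesis by simp
  qed
  ultimately show ?case by simp
next
  case (insert t T)
  have "HH \<Omega> wv (\<Union>t\<in>insert t T. F t) = HH \<Omega> wv (F t \<union> (\<Union>t\<in>T. F t))" by simp
  also have "\<dots> \<le> HH \<Omega> wv (F t) + HH \<Omega> wv (\<Union>t\<in>T. F t)" by (rule HH_subadd[OF fin])
  also have "\<dots> \<le> c t + (\<Sum>t\<in>T. c t)" using insert by (intro add_mono) auto
  finally show ?case using insert by simp
qed




definition Gd :: "nat \<Rightarrow> real^4 \<Rightarrow> (4 set \<Rightarrow> (4 \<Rightarrow> nat) \<Rightarrow> nat) \<Rightarrow> (4 \<Rightarrow> (4 set \<Rightarrow> nat) \<Rightarrow> (4 \<Rightarrow> nat) \<Rightarrow> nat) \<Rightarrow> (4 \<Rightarrow> nat) set" where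
  "Gd n R f g = {m \<in> msg_tuples n R. \<forall>j. g j (sent Kinst id f m) (restrict m (Ainst j)) = m j}"

definition wvf :: "(4 set \<Rightarrow> (4 \<Rightarrow> nat) \<Rightarrow> nat) \<Rightarrow> (4 \<Rightarrow> nat) \<Rightarrow> (4 + 4 set) \<Rightarrow> nat" where
  "wvf f m = (\<lambda>x. case x of Inl i \<Rightarrow> m i | Inr k \<Rightarrow> sent Kinst id f m k)"

lemma finite_msg_tuples: "finite (msg_tuples n R)"
  by (simp add: msg_tuples_def msg_set_def finite_PiE)

lemma card_Kinst_sub: "card {k \<in> Kinst. \<not> k \<subseteq> J} = 16 - 2 ^ card J"
proof -
  have e: "{k \<in> Kinst. \<not> k \<subseteq> J} = UNIV - Pow J" by (auto simp: Kinst_def)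
  have "card (UNIV :: 4 set set) = 16" by (simp add: card_UNIV_set)
  then show ?thesis unfolding e by (simp add: card_Diff_subset card_Pow)
qed

context
  fixes n :: nat and R :: "real^4" and f g
  assumes valid: "valid_encoders n R Kinst id (\<lambda>_. 1) f"
    and ne: "Gd n R f g \<noteq> {}"
begin

abbreviation "G \<equiv> Gd n R f g"
abbreviation "h \<equiv> HH G (wvf f)"

lemma finG: "finite G"
  by (rule finite_subset[OF _ finite_msg_tuples]) (auto simp: Gd_def)

lemma G_sub: "m \<in> G \<Longrightarrow> m \<in> msg_tuples n R"
  by (simp add: Gd_def)

lemma ln_card_mono:
  assumes "finite B" "A \<subseteq> B" "A \<noteq> {}"
  shows "ln (real (card A)) \<le> ln (real (card B))"
proof -
  have "0 < card A" using assms by (simp add: card_gt_0_iff finite_subset)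
  moreover have "card A \<le> card B" using assms by (simp add: card_mono)
  ultimately show ?thesis by simp
qed

lemma h_link: "k \<in> Kinst \<Longrightarrow> h {Inr k} \<le> real n * ln 2"
proof -
  assume k: "k \<in> Kinst"
  let ?phi = "\<lambda>v::nat. restrict (\<lambda>_. v) {Inr k :: 4 + 4 set}"
  have sub: "(\<lambda>m. restrict (wvf f m) {Inr k}) ` G \<subseteq> ?phi ` link_set n 1"
  proof
    fix y assume "y \<in> (\<lambda>m. restrict (wvf f m) {Inr k}) ` G"
    then obtain m where m: "m \<in> G" and y: "y = restrict (wvf f m) {Inr k}" by blast
    have "f k (restrict m k) \<in> link_set n 1"
      using valid k G_sub[OF m] by (auto simp: valid_encoders_def)
    moreover have "y = ?phi (f k (restrict m k))"
      using k by (auto simp: y wvf_def sent_def restrict_def)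
    ultimately show "y \<in> ?phi ` link_set n 1" by blast
  qed
  have "h {Inr k} \<le> ln (real (card ((\<lambda>m. restrict (wvf f m) {Inr k}) ` G)))"
    by (rule HH_card[OF finG ne])
  also have "\<dots> \<le> ln (real (card (?phi ` link_set n 1)))"
    by (rule ln_card_mono) (use sub ne in \<open>auto simp: link_set_def\<close>)
  also have "\<dots> \<le> ln (real (card (link_set n 1)))"
  proof -
    have "card (?phi ` link_set n 1) \<le> card (link_set n 1)" by (rule card_image_le) (simp add: link_set_def)
    moreover have "0 < card (?phi ` link_set n 1)" by (simp add: link_set_def card_gt_0_iff)
    ultimately show ?thesis by simp
  qed
  also have "\<dots> = real n * ln 2" by (simp add: link_set_def ln_realpow)
  finally show ?thesis .
qed

lemma h_msg: "h {Inl j} \<le> ln (real (card (msg_set n R j)))"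
proof -
  let ?phi = "\<lambda>v::nat. restrict (\<lambda>_. v) {Inl j :: 4 + 4 set}"
  have sub: "(\<lambda>m. restrict (wvf f m) {Inl j}) ` G \<subseteq> ?phi ` msg_set n R j"
  proof
    fix y assume "y \<in> (\<lambda>m. restrict (wvf f m) {Inl j}) ` G"
    then obtain m where m: "m \<in> G" and y: "y = restrict (wvf f m) {Inl j}" by blast
    have "m j \<in> msg_set n R j" using G_sub[OF m] by (auto simp: msg_tuples_def)
    moreover have "y = ?phi (m j)" by (auto simp: y wvf_def restrict_def)
    ultimately show "y \<in> ?phi ` msg_set n R j" by blast
  qed
  have "h {Inl j} \<le> ln (real (card ((\<lambda>m. restrict (wvf f m) {Inl j}) ` G)))"
    by (rule HH_card[OF finG ne])
  also have "\<dots> \<le> ln (real (card (?phi ` msg_set n R j)))"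
    by (rule ln_card_mono) (use sub ne in \<open>auto simp: msg_set_def\<close>)
  also have "\<dots> \<le> ln (real (card (msg_set n R j)))"
  proof -
    have "card (?phi ` msg_set n R j) \<le> card (msg_set n R j)" by (rule card_image_le) (simp add: msg_set_def)
    moreover have "0 < card (?phi ` msg_set n R j)" by (simp add: msg_set_def card_gt_0_iff)
    ultimately show ?thesis by simp
  qed
  finally show ?thesis .
qed

lemma h_all: "h (Inl ` UNIV) = ln (real (card G))"
  unfolding HH_def
proof (rule ent_inj[OF finG])
  show "inj_on (\<lambda>m. restrict (wvf f m) (Inl ` UNIV)) G"
  proof
    fix m m' assume "m \<in> G" "m' \<in> G" "restrict (wvf f m) (Inl ` UNIV) = restrict (wvf f m') (Inl ` UNIV)"
    then have "\<forall>i. wvf f m (Inl i) = wvf f m' (Inl i)" by (auto simp: restrict_eq_iff)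
    then show "m = m'" by (auto simp: wvf_def fun_eq_iff)
  qed
qed

lemma h_dec:
  assumes "Inl ` Ainst j \<union> Inr ` Kinst \<subseteq> U"
  shows "h (U \<union> {Inl j}) = h U"
proof (rule HH_det)
  fix m m' assume m: "m \<in> G" and m': "m' \<in> G" and eq: "\<forall>x\<in>U. wvf f m x = wvf f m' x"
  have s: "sent Kinst id f m = sent Kinst id f m'"
  proof
    fix k show "sent Kinst id f m k = sent Kinst id f m' k"
    proof (cases "k \<in> Kinst")
      case True then have "Inr k \<in> U" using assms by auto
      then show ?thesis using eq by (auto simp: wvf_def)
    next
      case False then show ?thesis by (simp add: sent_def)
    qed
  qed
  have r: "restrict m (Ainst j) = restrict m' (Ainst j)"
  proof -
    have "\<forall>i\<in>Ainst j. m i = m' i" using eq assms by (force simp: wvf_def)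
    then show ?thesis by (simp add: restrict_eq_iff)
  qed
  have "m j = m' j" using m m' s r by (simp add: Gd_def) metis
  then show "\<forall>x\<in>{Inl j}. wvf f m x = wvf f m' x" by (simp add: wvf_def)
qed

lemma h_fn:
  assumes "\<And>k. k \<in> T \<Longrightarrow> Inl ` k \<subseteq> U"
  shows "h (U \<union> Inr ` T) = h U"
proof (rule HH_det)
  fix m m' assume m: "m \<in> G" and m': "m' \<in> G" and eq: "\<forall>x\<in>U. wvf f m x = wvf f m' x"
  show "\<forall>x\<in>Inr ` T. wvf f m x = wvf f m' x"
  proof
    fix x :: "4 + 4 set" assume "x \<in> Inr ` T"
    then obtain k where k: "k \<in> T" "x = Inr k" by blast
    have "\<forall>i\<in>k. m i = m' i" using eq assms[OF k(1)] by (force simp: wvf_def)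
    then have "restrict m k = restrict m' k" by (simp add: restrict_eq_iff)
    then show "wvf f m x = wvf f m' x" using k by (simp add: wvf_def sent_def)
  qed
qed

lemma h_msgs: "finite J \<Longrightarrow> h (Inl ` J) \<le> (\<Sum>j\<in>J. ln (real (card (msg_set n R j))))"
proof -
  assume J: "finite J"
  have eq: "(\<Union>j\<in>J. {Inl j}) = Inl ` J" by auto
  have "h (\<Union>j\<in>J. {Inl j}) \<le> (\<Sum>j\<in>J. ln (real (card (msg_set n R j))))"
    by (rule HH_UN[OF finG J]) (rule h_msg)
  then show ?thesis unfolding eq .
qed

lemma h_links: "T \<subseteq> Kinst \<Longrightarrow> h (Inr ` T) \<le> real (card T) * (real n * ln 2)"
proof -
  assume T: "T \<subseteq> Kinst"
  have fT: "finite T" by (rule finite_subset[OF T]) simp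
  have eq: "(\<Union>k\<in>T. {Inr k}) = Inr ` T" by auto
  have "h (\<Union>k\<in>T. {Inr k}) \<le> (\<Sum>k\<in>T. real n * ln 2)"
    by (rule HH_UN[OF finG fT]) (use T h_link in auto)
  then show ?thesis unfolding eq by simp
qed

lemma cut_bound:
  assumes dec: "h (Inl ` Jc \<union> Inr ` Kinst) = h (Inl ` UNIV \<union> Inr ` Kinst)"
  shows "ln (real (card G)) \<le> (\<Sum>j\<in>Jc. ln (real (card (msg_set n R j)))) + real (16 - 2 ^ card Jc) * (real n * ln 2)"
proof -
  have "ln (real (card G)) = h (Inl ` UNIV)" by (simp add: h_all)
  also have "\<dots> \<le> h (Inl ` UNIV \<union> Inr ` Kinst)" by (rule HH_mono[OF finG]) auto
  also have "\<dots> = h (Inl ` Jc \<union> Inr ` Kinst)" using dec by simp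
  also have "Inl ` Jc \<union> Inr ` Kinst = (Inl ` Jc \<union> Inr ` {k \<in> Kinst. k \<subseteq> Jc}) \<union> Inr ` {k \<in> Kinst. \<not> k \<subseteq> Jc}"
    by auto
  also have "h \<dots> \<le> h (Inl ` Jc \<union> Inr ` {k \<in> Kinst. k \<subseteq> Jc}) + h (Inr ` {k \<in> Kinst. \<not> k \<subseteq> Jc})"
    by (rule HH_subadd[OF finG])
  also have "h (Inl ` Jc \<union> Inr ` {k \<in> Kinst. k \<subseteq> Jc}) = h (Inl ` Jc)"
    by (rule h_fn) auto
  also have "\<dots> \<le> (\<Sum>j\<in>Jc. ln (real (card (msg_set n R j))))" by (rule h_msgs) simp
  also have "h (Inr ` {k \<in> Kinst. \<not> k \<subseteq> Jc}) \<le> real (card {k \<in> Kinst. \<not> k \<subseteq> Jc}) * (real n * ln 2)"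
    by (rule h_links) auto
  also have "card {k \<in> Kinst. \<not> k \<subseteq> Jc} = 16 - 2 ^ card Jc" by (rule card_Kinst_sub)
  finally show ?thesis by simp
qed


lemma sub_no3: "(k::4 set) \<subseteq> {1,2,4} \<longleftrightarrow> 3 \<notin> k"
proof
  assume "3 \<notin> k"
  then show "k \<subseteq> {1,2,4}" using exhaust4 by blast
qed auto

lemma sub_no2: "(k::4 set) \<subseteq> {1,3,4} \<longleftrightarrow> 2 \<notin> k"
proof
  assume "2 \<notin> k"
  then show "k \<subseteq> {1,3,4}" using exhaust4 by blast
qed auto

lemma UNIV4': "(UNIV :: 4 set) = {1,2,3,4}" by (simp add: UNIV_4)

lemma h_dec': "Inl ` Ainst j \<union> Inr ` Kinst \<subseteq> U \<Longrightarrow> V = U \<union> {Inl j} \<Longrightarrow> h V = h U"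
  using h_dec by simp

lemma h_fn': "(\<And>k. k \<in> T \<Longrightarrow> Inl ` k \<subseteq> U) \<Longrightarrow> V = U \<union> Inr ` T \<Longrightarrow> h V = h U"
  using h_fn by simp

lemma h_submod': "V1 = U \<union> V \<Longrightarrow> V2 = U \<inter> V \<Longrightarrow> h V1 + h V2 \<le> h U + h V"
  using HH_submod[OF finG] by simp

lemma h_subadd': "V = U \<union> W \<Longrightarrow> h V \<le> h U + h W"
  using HH_subadd[OF finG] by simp

lemma h_mono': "U \<subseteq> V \<Longrightarrow> h U \<le> h V"
  by (rule HH_mono[OF finG])

abbreviation "NN j \<equiv> ln (real (card (msg_set n R j)))"

lemma bound_single:
  "ln (real (card G)) \<le> (\<Sum>i\<in>UNIV - {j}. NN i) + 8 * (real n * ln 2)"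
proof -
  have "j \<notin> Ainst j" using exhaust4[of j] by (auto simp: Ainst_def)
  then have "h (Inl ` (UNIV - {j}) \<union> Inr ` Kinst) = h (Inl ` UNIV \<union> Inr ` Kinst)"
    by (intro h_dec'[symmetric]) auto
  from cut_bound[OF this] show ?thesis by (simp add: card_Diff_singleton)
qed

lemma bound_12: "ln (real (card G)) \<le> NN 3 + NN 4 + 12 * (real n * ln 2)"
proof -
  have "h (Inl ` {3,4::4} \<union> Inr ` Kinst) = h (Inl ` {3,4::4} \<union> Inr ` Kinst \<union> {Inl 1})"
    by (rule h_dec'[symmetric]) (auto simp: Ainst_def)
  also have "\<dots> = h (Inl ` {3,4::4} \<union> Inr ` Kinst \<union> {Inl 1} \<union> {Inl 2})"
    by (rule h_dec'[symmetric]) (auto simp: Ainst_def)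
  also have "Inl ` {3,4::4} \<union> Inr ` Kinst \<union> {Inl 1} \<union> {Inl 2} = Inl ` UNIV \<union> Inr ` Kinst"
    by (auto simp: UNIV4')
  finally show ?thesis using cut_bound[of "{3,4}"] by simp
qed

lemma bound_13: "ln (real (card G)) \<le> NN 2 + NN 4 + 12 * (real n * ln 2)"
proof -
  have "h (Inl ` {2,4::4} \<union> Inr ` Kinst) = h (Inl ` {2,4::4} \<union> Inr ` Kinst \<union> {Inl 1})"
    by (rule h_dec'[symmetric]) (auto simp: Ainst_def)
  also have "\<dots> = h (Inl ` {2,4::4} \<union> Inr ` Kinst \<union> {Inl 1} \<union> {Inl 3})"
    by (rule h_dec'[symmetric]) (auto simp: Ainst_def)
  also have "Inl ` {2,4::4} \<union> Inr ` Kinst \<union> {Inl 1} \<union> {Inl 3} = Inl ` UNIV \<union> Inr ` Kinst"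
    by (auto simp: UNIV4')
  finally show ?thesis using cut_bound[of "{2,4}"] by simp
qed

lemma bound_14: "ln (real (card G)) \<le> NN 2 + NN 3 + 12 * (real n * ln 2)"
proof -
  have "h (Inl ` {2,3::4} \<union> Inr ` Kinst) = h (Inl ` {2,3::4} \<union> Inr ` Kinst \<union> {Inl 4})"
    by (rule h_dec'[symmetric]) (auto simp: Ainst_def)
  also have "\<dots> = h (Inl ` {2,3::4} \<union> Inr ` Kinst \<union> {Inl 4} \<union> {Inl 1})"
    by (rule h_dec'[symmetric]) (auto simp: Ainst_def)
  also have "Inl ` {2,3::4} \<union> Inr ` Kinst \<union> {Inl 4} \<union> {Inl 1} = Inl ` UNIV \<union> Inr ` Kinst"
    by (auto simp: UNIV4')
  finally show ?thesis using cut_bound[of "{2,3}"] by simp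
qed

lemma bound_34: "ln (real (card G)) \<le> NN 1 + NN 2 + 12 * (real n * ln 2)"
proof -
  have "h (Inl ` {1,2::4} \<union> Inr ` Kinst) = h (Inl ` {1,2::4} \<union> Inr ` Kinst \<union> {Inl 3})"
    by (rule h_dec'[symmetric]) (auto simp: Ainst_def)
  also have "\<dots> = h (Inl ` {1,2::4} \<union> Inr ` Kinst \<union> {Inl 3} \<union> {Inl 4})"
    by (rule h_dec'[symmetric]) (auto simp: Ainst_def)
  also have "Inl ` {1,2::4} \<union> Inr ` Kinst \<union> {Inl 3} \<union> {Inl 4} = Inl ` UNIV \<union> Inr ` Kinst"
    by (auto simp: UNIV4')
  finally show ?thesis using cut_bound[of "{1,2}"] by simp
qed


lemma mem_no3: "3 \<notin> k \<Longrightarrow> x \<in> k \<Longrightarrow> (x::4) \<in> {1,2,4}"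
  using sub_no3 by blast

lemma mem_no2: "2 \<notin> k \<Longrightarrow> x \<in> k \<Longrightarrow> (x::4) \<in> {1,3,4}"
  using sub_no2 by blast

lemma card_Y23: "card {k \<in> Kinst. 2 \<in> k \<and> 3 \<in> k} \<le> 4"
proof -
  have "{k \<in> Kinst. 2 \<in> k \<and> 3 \<in> k} \<subseteq> (\<lambda>s. s \<union> {2,3}) ` Pow {1,4}"
  proof
    fix k assume k: "k \<in> {k \<in> Kinst. 2 \<in> k \<and> 3 \<in> k}"
    have "k - {2,3} \<in> Pow {1,4}" using exhaust4 by blast
    moreover have "k = (k - {2,3}) \<union> {2,3}" using k by auto
    ultimately show "k \<in> (\<lambda>s. s \<union> {2,3}) ` Pow {1,4}" by blast
  qed
  then have "card {k \<in> Kinst. 2 \<in> k \<and> 3 \<in> k} \<le> card ((\<lambda>s. s \<union> {2,3}) ` Pow {1,4::4})"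
    by (intro card_mono) auto
  also have "\<dots> \<le> card (Pow {1,4::4})" by (rule card_image_le) simp
  also have "\<dots> = 4" by (simp add: card_Pow)
  finally show ?thesis .
qed

lemma card_K14: "card {k \<in> Kinst. k \<noteq> {4}} = 14"
proof -
  have "{k \<in> Kinst. k \<noteq> {4}} = UNIV - {{}, {4}}" by (auto simp: Kinst_def)
  moreover have "card (UNIV :: 4 set set) = 16" by (simp add: card_UNIV_set)
  ultimately show ?thesis by (simp add: card_Diff_subset)
qed

lemma bound_18:
  "2 * ln (real (card G)) \<le> NN 1 + NN 2 + NN 3 + 2 * NN 4 + 18 * (real n * ln 2)"
proof -
  let ?X = "Inr ` Kinst :: (4 + 4 set) set"
  let ?Y2 = "Inr ` {k\<in>Kinst. 2 \<in> k \<and> 3 \<notin> k} :: (4 + 4 set) set"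
  let ?Y3 = "Inr ` {k\<in>Kinst. 3 \<in> k \<and> 2 \<notin> k} :: (4 + 4 set) set"
  let ?Y23 = "Inr ` {k\<in>Kinst. 2 \<in> k \<and> 3 \<in> k} :: (4 + 4 set) set"
  let ?A4 = "Inl ` {4::4} :: (4 + 4 set) set"
  let ?A14 = "Inl ` {1,4::4} :: (4 + 4 set) set"
  let ?A124 = "Inl ` {1,2,4::4} :: (4 + 4 set) set"
  let ?A134 = "Inl ` {1,3,4::4} :: (4 + 4 set) set"
  let ?AU = "Inl ` (UNIV :: 4 set) :: (4 + 4 set) set"
  have f1: "h (?A14 \<union> ?X) = h (?A4 \<union> ?X)" by (rule h_dec'[where j=1]) (auto simp: Ainst_def)
  have f2: "h ?AU \<le> h (?AU \<union> ?X)" by (rule h_mono') auto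
  have f3: "h (?AU \<union> ?X) = h (?A124 \<union> ?X)"
  proof (rule h_dec'[where j=3])
    show "Inl ` Ainst 3 \<union> ?X \<subseteq> ?A124 \<union> ?X" by (auto simp: Ainst_def)
    show "?AU \<union> ?X = ?A124 \<union> ?X \<union> {Inl 3}" using exhaust4 by blast
  qed
  have f4: "h (?A124 \<union> ?X) = h (?A124 \<union> ?Y3 \<union> ?Y23)"
  proof (rule h_fn'[where T="{k\<in>Kinst. 3 \<notin> k}"])
    fix k assume "k \<in> {k\<in>Kinst. 3 \<notin> k}"
    then show "Inl ` k \<subseteq> ?A124 \<union> ?Y3 \<union> ?Y23" using mem_no3 by blast
  qed auto
  have f5: "h (?A124 \<union> ?Y3) + h ?A14 \<le> h ?A124 + h (?A14 \<union> ?Y3)"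
    by (rule h_submod') auto
  have f6: "h (?A124 \<union> ?Y2 \<union> ?Y3) = h (?A124 \<union> ?Y3)"
  proof (rule h_fn'[where T="{k\<in>Kinst. 2 \<in> k \<and> 3 \<notin> k}"])
    fix k assume "k \<in> {k\<in>Kinst. 2 \<in> k \<and> 3 \<notin> k}"
    then show "Inl ` k \<subseteq> ?A124 \<union> ?Y3" using mem_no3 by blast
  qed auto
  have f7: "h (?A124 \<union> ?Y2 \<union> ?Y3 \<union> ?Y23) = h (?A124 \<union> ?Y3 \<union> ?Y23)"
  proof (rule h_fn'[where T="{k\<in>Kinst. 2 \<in> k \<and> 3 \<notin> k}"])
    fix k assume "k \<in> {k\<in>Kinst. 2 \<in> k \<and> 3 \<notin> k}"
    then show "Inl ` k \<subseteq> ?A124 \<union> ?Y3 \<union> ?Y23" using mem_no3 by blast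
  qed auto
  have f8: "h (?A124 \<union> ?Y2 \<union> ?Y3 \<union> ?Y23) + h (?A14 \<union> ?Y2 \<union> ?Y3) \<le> h (?A124 \<union> ?Y2 \<union> ?Y3) + h (?A14 \<union> ?Y2 \<union> ?Y3 \<union> ?Y23)"
    by (rule h_submod') auto
  have f9: "h (?AU \<union> ?X) = h (?A134 \<union> ?X)"
  proof (rule h_dec'[where j=2])
    show "Inl ` Ainst 2 \<union> ?X \<subseteq> ?A134 \<union> ?X" by (auto simp: Ainst_def)
    show "?AU \<union> ?X = ?A134 \<union> ?X \<union> {Inl 2}" using exhaust4 by blast
  qed
  have f10: "h (?A134 \<union> ?X) = h (?A134 \<union> ?Y2 \<union> ?Y23)"
  proof (rule h_fn'[where T="{k\<in>Kinst. 2 \<notin> k}"])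
    fix k assume "k \<in> {k\<in>Kinst. 2 \<notin> k}"
    then show "Inl ` k \<subseteq> ?A134 \<union> ?Y2 \<union> ?Y23" using mem_no2 by blast
  qed auto
  have f11a: "h (?A134 \<union> ?Y2 \<union> ?Y3) = h (?A134 \<union> ?Y2)"
  proof (rule h_fn'[where T="{k\<in>Kinst. 3 \<in> k \<and> 2 \<notin> k}"])
    fix k assume "k \<in> {k\<in>Kinst. 3 \<in> k \<and> 2 \<notin> k}"
    then show "Inl ` k \<subseteq> ?A134 \<union> ?Y2" using mem_no2 by blast
  qed auto
  have f11b: "h (?A134 \<union> ?Y3) = h ?A134"
  proof (rule h_fn'[where T="{k\<in>Kinst. 3 \<in> k \<and> 2 \<notin> k}"])
    fix k assume "k \<in> {k\<in>Kinst. 3 \<in> k \<and> 2 \<notin> k}"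
    then show "Inl ` k \<subseteq> ?A134" using mem_no2 by blast
  qed auto
  have f12: "h (?A134 \<union> ?Y2 \<union> ?Y3) + h (?A14 \<union> ?Y3) \<le> h (?A134 \<union> ?Y3) + h (?A14 \<union> ?Y2 \<union> ?Y3)"
    by (rule h_submod') auto
  have f13: "h (?A134 \<union> ?Y2 \<union> ?Y23) \<le> h (?A134 \<union> ?Y2) + h ?Y23"
    by (rule h_subadd') auto
  have f14: "h (?A14 \<union> ?Y2 \<union> ?Y3 \<union> ?Y23) \<le> h (?A14 \<union> ?X)"
    by (rule h_mono') auto
  have f15a: "h (?A4 \<union> ?X) \<le> h (?A4 \<union> Inr ` {{4}}) + h (Inr ` {k\<in>Kinst. k \<noteq> {4}})"
    by (rule h_subadd') (auto simp: Kinst_def)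
  have f15b: "h (?A4 \<union> Inr ` {{4}}) = h ?A4"
    by (rule h_fn'[where T="{{4}}"]) auto
  have f16a: "h (Inr ` {k\<in>Kinst. k \<noteq> {4}}) \<le> 14 * (real n * ln 2)"
    using h_links[of "{k\<in>Kinst. k \<noteq> {4}}"] card_K14 by simp
  have f16b: "h ?Y23 \<le> 4 * (real n * ln 2)"
  proof -
    have "h ?Y23 \<le> real (card {k\<in>Kinst. 2 \<in> k \<and> 3 \<in> k}) * (real n * ln 2)"
      by (rule h_links) auto
    also have "\<dots> \<le> 4 * (real n * ln 2)"
      using card_Y23 by (intro mult_right_mono) auto
    finally show ?thesis .
  qed
  have f17a: "h ?A124 \<le> NN 1 + NN 2 + NN 4" using h_msgs[of "{1,2,4}"] by simp
  have f17b: "h ?A134 \<le> h ?A14 + h (Inl ` {3})"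
    by (rule h_subadd') auto
  have f17c: "h (Inl ` {3}) \<le> NN 3" using h_msgs[of "{3}"] by simp
  have f18: "h ?A4 \<le> NN 4" using h_msgs[of "{4}"] by simp
  have f19: "h ?AU = ln (real (card G))" by (rule h_all)
  have f20: "h ?AU = h (?AU \<union> ?X)"
  proof -
    have "h ?AU \<le> h (?AU \<union> ?X)" by (rule f2)
    moreover have "h (?AU \<union> ?X) \<le> h ?AU"
    proof -
      have "h (?AU \<union> ?X) = h ?AU"
        by (rule h_fn'[where T=Kinst]) auto
      then show ?thesis by simp
    qed
    ultimately show ?thesis by simp
  qed
  have f21: "h (?AU) \<le> h (?A124 \<union> ?X)" using f2 f3 by simp
  show ?thesis
    using f1 f3 f4 f5 f6 f7 f8 f9 f10 f11a f11b f12 f13 f14 f15a f15b f16a f16b f17a f17b f17c f18 f19 f20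
    by linarith
qed

end




lemma sum_UNIV4: "(\<Sum>j\<in>(UNIV::4 set). \<phi> j) = \<phi> 1 + \<phi> 2 + \<phi> 3 + \<phi> 4"
  by (rule sum_4)

lemma NN_eq: "ln (real (card (msg_set n R j))) = real (nat \<lceil>real n * R $ j\<rceil>) * ln 2"
  by (simp add: msg_set_def ln_realpow)

lemma card_msg_tuples_pos: "0 < card (msg_tuples n R)"
  by (simp add: msg_tuples_def msg_set_def card_PiE card_gt_0_iff finite_PiE PiE_eq_empty_iff)

lemma ln_card_msg_tuples:
  "ln (real (card (msg_tuples n R))) = (\<Sum>j\<in>UNIV. ln (real (card (msg_set n R j))))"
proof -
  have "card (msg_tuples n R) = (\<Prod>j\<in>UNIV. card (msg_set n R j))"
    by (simp add: msg_tuples_def card_PiE)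
  then have "real (card (msg_tuples n R)) = (\<Prod>j\<in>UNIV. real (card (msg_set n R j)))" by simp
  moreover have "\<And>j. 0 < real (card (msg_set n R j))" by (simp add: msg_set_def)
  ultimately show ?thesis by (simp add: ln_prod)
qed

lemma G_large:
  assumes err: "error_prob n R Kinst id Ainst f g < 1/2"
  shows "Gd n R f g \<noteq> {}" and "ln (real (card (msg_tuples n R))) - ln 2 \<le> ln (real (card (Gd n R f g)))"
proof -
  define M where "M = msg_tuples n R"
  define E where "E = {m \<in> M. \<exists>j. g j (sent Kinst id f m) (restrict m (Ainst j)) \<noteq> m j}"
  have fM: "finite M" by (simp add: M_def finite_msg_tuples)
  have M0: "0 < card M" by (simp add: M_def card_msg_tuples_pos)
  have part: "M = E \<union> Gd n R f g" "E \<inter> Gd n R f g = {}" by (auto simp: E_def Gd_def M_def)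
  have cM: "card M = card E + card (Gd n R f g)"
    using fM part by (metis card_Un_disjoint finite_Un)
  have "real (card E) / real (card M) < 1/2" using err by (simp add: error_prob_def E_def M_def)
  then have "2 * real (card E) < real (card M)" using M0 by (simp add: field_simps)
  then have lt: "real (card M) < 2 * real (card (Gd n R f g))" using cM by simp
  then show "Gd n R f g \<noteq> {}" by auto
  have "ln (real (card M)) < ln (2 * real (card (Gd n R f g)))" using lt M0 by simp
  also have "\<dots> = ln 2 + ln (real (card (Gd n R f g)))"
    using lt M0 by (subst ln_mult) auto
  finally show "ln (real (card (msg_tuples n R))) - ln 2 \<le> ln (real (card (Gd n R f g)))"
    by (simp add: M_def)
qed

lemma conv_n:
  assumes valid: "valid_encoders n R Kinst id (\<lambda>_. 1) f"
    and err: "error_prob n R Kinst id Ainst f g < 1/2"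
  defines "a \<equiv> \<lambda>j. real (nat \<lceil>real n * R $ j\<rceil>)"
  shows "(\<forall>j. a j \<le> 8 * real n + 1) \<and> a 1 + a 2 \<le> 12 * real n + 1 \<and> a 1 + a 3 \<le> 12 * real n + 1
     \<and> a 1 + a 4 \<le> 12 * real n + 1 \<and> a 3 + a 4 \<le> 12 * real n + 1 \<and> a 1 + a 2 + a 3 \<le> 18 * real n + 2"
proof -
  note ne = G_large(1)[OF err]
  have low: "(\<Sum>j\<in>UNIV. a j * ln 2) - ln 2 \<le> ln (real (card (Gd n R f g)))"
    using G_large(2)[OF err] unfolding ln_card_msg_tuples NN_eq a_def .
  have l2: "0 < (ln 2 :: real)" by simp
  have single: "a j \<le> 8 * real n + 1" for j
  proof -
    have "ln (real (card (Gd n R f g))) \<le> (\<Sum>i\<in>UNIV - {j}. a i * ln 2) + 8 * (real n * ln 2)"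
      using bound_single[OF valid ne, of j] unfolding NN_eq a_def .
    moreover have "(\<Sum>i\<in>UNIV. a i * ln 2) = a j * ln 2 + (\<Sum>i\<in>UNIV - {j}. a i * ln 2)"
      by (simp add: sum.remove)
    ultimately have "a j * ln 2 \<le> (8 * real n + 1) * ln 2" using low by (simp add: algebra_simps)
    then show ?thesis using l2 by simp
  qed
  have s4: "(\<Sum>j\<in>UNIV. a j * ln 2) = (a 1 + a 2 + a 3 + a 4) * ln 2"
    by (simp add: sum_UNIV4 algebra_simps)
  have p12: "a 1 + a 2 \<le> 12 * real n + 1"
  proof -
    have "(a 1 + a 2) * ln 2 \<le> (12 * real n + 1) * ln 2"
      using bound_12[OF valid ne] low s4 unfolding NN_eq a_def by (simp add: algebra_simps)
    then show ?thesis using l2 by simp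
  qed
  have p13: "a 1 + a 3 \<le> 12 * real n + 1"
  proof -
    have "(a 1 + a 3) * ln 2 \<le> (12 * real n + 1) * ln 2"
      using bound_13[OF valid ne] low s4 unfolding NN_eq a_def by (simp add: algebra_simps)
    then show ?thesis using l2 by simp
  qed
  have p14: "a 1 + a 4 \<le> 12 * real n + 1"
  proof -
    have "(a 1 + a 4) * ln 2 \<le> (12 * real n + 1) * ln 2"
      using bound_14[OF valid ne] low s4 unfolding NN_eq a_def by (simp add: algebra_simps)
    then show ?thesis using l2 by simp
  qed
  have p34: "a 3 + a 4 \<le> 12 * real n + 1"
  proof -
    have "(a 3 + a 4) * ln 2 \<le> (12 * real n + 1) * ln 2"
      using bound_34[OF valid ne] low s4 unfolding NN_eq a_def by (simp add: algebra_simps)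
    then show ?thesis using l2 by simp
  qed
  have t: "a 1 + a 2 + a 3 \<le> 18 * real n + 2"
  proof -
    have "(a 1 + a 2 + a 3) * ln 2 \<le> (18 * real n + 2) * ln 2"
      using bound_18[OF valid ne] low s4 unfolding NN_eq a_def by (simp add: algebra_simps)
    then show ?thesis using l2 by simp
  qed
  show ?thesis using single p12 p13 p14 p34 t by blast
qed




lemma limit_le:
  fixes x b c :: real
  assumes h: "\<And>n. n \<ge> Nz \<Longrightarrow> real n * x \<le> real n * b + c"
  shows "x \<le> b"
proof (rule ccontr)
  assume "\<not> x \<le> b"
  then have d: "0 < x - b" by simp
  define n where "n = max Nz (nat \<lceil>(\<bar>c\<bar> + 1) / (x - b)\<rceil>)"
  have "(\<bar>c\<bar> + 1) / (x - b) \<le> real n" unfolding n_def by linarith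
  then have "\<bar>c\<bar> + 1 \<le> real n * (x - b)" using d by (simp add: field_simps)
  moreover have "real n * x \<le> real n * b + c" using h by (simp add: n_def)
  ultimately show False by (simp add: algebra_simps)
qed

lemma converse_ach:
  assumes ach: "achievable Kinst id (\<lambda>_. 1) Ainst R"
  shows "(\<forall>j. 0 \<le> R $ j) \<and> (\<forall>j. R $ j \<le> 8) \<and>
              R $ 1 + R $ 2 \<le> 12 \<and> R $ 1 + R $ 3 \<le> 12 \<and> R $ 1 + R $ 4 \<le> 12 \<and>
              R $ 3 + R $ 4 \<le> 12 \<and> R $ 1 + R $ 2 + R $ 3 \<le> 18"
proof -
  obtain F G where R0: "\<forall>j. 0 \<le> R $ j" and V: "\<And>n. valid_encoders n R Kinst id (\<lambda>_. 1) (F n)"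
    and lim: "(\<lambda>n. error_prob n R Kinst id Ainst (F n) (G n)) \<longlonglongrightarrow> 0"
    using ach unfolding achievable_def by blast
  have "eventually (\<lambda>n. error_prob n R Kinst id Ainst (F n) (G n) < 1/2) sequentially"
    using order_tendstoD(2)[OF lim, of "1/2"] by simp
  then obtain n0 where n0: "\<And>n. n \<ge> n0 \<Longrightarrow> error_prob n R Kinst id Ainst (F n) (G n) < 1/2"
    by (auto simp: eventually_sequentially)
  define a where "a n j = real (nat \<lceil>real n * R $ j\<rceil>)" for n j
  have aR: "real n * R $ j \<le> a n j" for n j
    unfolding a_def by linarith
  have C: "(\<forall>j. a n j \<le> 8 * real n + 1) \<and> a n 1 + a n 2 \<le> 12 * real n + 1 \<and> a n 1 + a n 3 \<le> 12 * real n + 1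
     \<and> a n 1 + a n 4 \<le> 12 * real n + 1 \<and> a n 3 + a n 4 \<le> 12 * real n + 1 \<and> a n 1 + a n 2 + a n 3 \<le> 18 * real n + 2"
    if "n \<ge> n0" for n
    using conv_n[OF V n0[OF that]] unfolding a_def by simp
  have r1: "R $ j \<le> 8" for j
  proof (rule limit_le[where Nz=n0 and c=1])
    fix n assume "n \<ge> n0"
    then have "a n j \<le> 8 * real n + 1" using C by blast
    then show "real n * R $ j \<le> real n * 8 + 1" using aR[of n j] by linarith
  qed
  have r12: "R $ 1 + R $ 2 \<le> 12"
  proof (rule limit_le[where Nz=n0 and c=1])
    fix n assume "n \<ge> n0"
    then have "a n 1 + a n 2 \<le> 12 * real n + 1" using C by blast
    then show "real n * (R $ 1 + R $ 2) \<le> real n * 12 + 1" using aR[of n 1] aR[of n 2] by (simp add: algebra_simps)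
  qed
  have r13: "R $ 1 + R $ 3 \<le> 12"
  proof (rule limit_le[where Nz=n0 and c=1])
    fix n assume "n \<ge> n0"
    then have "a n 1 + a n 3 \<le> 12 * real n + 1" using C by blast
    then show "real n * (R $ 1 + R $ 3) \<le> real n * 12 + 1" using aR[of n 1] aR[of n 3] by (simp add: algebra_simps)
  qed
  have r14: "R $ 1 + R $ 4 \<le> 12"
  proof (rule limit_le[where Nz=n0 and c=1])
    fix n assume "n \<ge> n0"
    then have "a n 1 + a n 4 \<le> 12 * real n + 1" using C by blast
    then show "real n * (R $ 1 + R $ 4) \<le> real n * 12 + 1" using aR[of n 1] aR[of n 4] by (simp add: algebra_simps)
  qed
  have r34: "R $ 3 + R $ 4 \<le> 12"
  proof (rule limit_le[where Nz=n0 and c=1])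
    fix n assume "n \<ge> n0"
    then have "a n 3 + a n 4 \<le> 12 * real n + 1" using C by blast
    then show "real n * (R $ 3 + R $ 4) \<le> real n * 12 + 1" using aR[of n 3] aR[of n 4] by (simp add: algebra_simps)
  qed
  have r123: "R $ 1 + R $ 2 + R $ 3 \<le> 18"
  proof (rule limit_le[where Nz=n0 and c=2])
    fix n assume "n \<ge> n0"
    then have "a n 1 + a n 2 + a n 3 \<le> 18 * real n + 2" using C by blast
    then show "real n * (R $ 1 + R $ 2 + R $ 3) \<le> real n * 18 + 2" using aR[of n 1] aR[of n 2] aR[of n 3] by (simp add: algebra_simps)
  qed
  show ?thesis using R0 r1 r12 r13 r14 r34 r123 by blast
qed


theorem mainTheorem4:
  shows "capacity_region {S :: 4 set. S \<noteq> {}} id (\<lambda>_. 1)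
           (\<lambda>j :: 4. if j = 1 then {4} else if j = 2 then {3, 4}
                     else if j = 3 then {1, 2} else {2, 3})
         = {R :: real^4. (\<forall>j. 0 \<le> R $ j) \<and> (\<forall>j. R $ j \<le> 8) \<and>
              R $ 1 + R $ 2 \<le> 12 \<and> R $ 1 + R $ 3 \<le> 12 \<and> R $ 1 + R $ 4 \<le> 12 \<and>
              R $ 3 + R $ 4 \<le> 12 \<and> R $ 1 + R $ 2 + R $ 3 \<le> 18}"
proof -
  have K: "{S :: 4 set. S \<noteq> {}} = Kinst" by (simp add: Kinst_def)
  have A: "(\<lambda>j :: 4. if j = 1 then {4} else if j = 2 then {3, 4}
                     else if j = 3 then {1, 2} else {2, 3}) = Ainst" by (simp add: Ainst_def)
  have P: "{R :: real^4. (\<forall>j. 0 \<le> R $ j) \<and> (\<forall>j. R $ j \<le> 8) \<and>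
              R $ 1 + R $ 2 \<le> 12 \<and> R $ 1 + R $ 3 \<le> 12 \<and> R $ 1 + R $ 4 \<le> 12 \<and>
              R $ 3 + R $ 4 \<le> 12 \<and> R $ 1 + R $ 2 + R $ 3 \<le> 18} = Preg" by (simp add: Preg_def)
  have sub1: "{R. achievable Kinst id (\<lambda>_. 1) Ainst R} \<subseteq> Preg"
    using converse_ach unfolding Preg_def by blast
  show ?thesis unfolding K A P capacity_region_def
  proof
    show "closure {R. achievable Kinst id (\<lambda>_. 1) Ainst R} \<subseteq> Preg"
      by (rule closure_minimal[OF sub1 closed_Preg])
    show "Preg \<subseteq> closure {R. achievable Kinst id (\<lambda>_. 1) Ainst R}"
      by (rule Preg_sub_closure)
  qed
qed

end
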